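(* Let $f:\mathbb{R}^n\times\mathbb{R}_+\to\mathbb{R}$ be thrice continuously differentiable with $\nabla_{\mathbf{x}\mathbf{x}} f(\mathbf{x},t)\succeq m\mathbf{I}_n$ for some $m>0$ and all $(\mathbf{x},t)$, and suppose that for all $\mathbf{x},t$ and $i\in\{1,\dots,n\}$: $\|\nabla_{\mathbf{x}\mathbf{x}} f\|_2\le C_{xx}$, $\|\nabla_{\mathbf{x}t} f\|_2\le C_{xt}$, $\|\nabla_{\mathbf{x}\mathbf{x}t} f\|_2\le C_{xxt}$, $\|\nabla_{\mathbf{x}tt} f\|_2\le C_{xtt}$, $\|\nabla_{\mathbf{x}\mathbf{x}\mathbf{x}_i} f\|_2\le C_{xxx}$ for given positive constants. Fix $\alpha>0$, $t_0=0$ and $\mathbf{x}_0\in\mathbb{R}^n$. Construct recursively, for $k=0,1,2,\dots$: $\dot{\mathbf{x}}_k=-\nabla_{\mathbf{x}\mathbf{x}}^{-1} f(\mathbf{x}_k,t_k)[\alpha\nabla_{\mathbf{x}} f(\mathbf{x}_k,t_k)+\nabla_{\mathbf{x}t} f(\mathbf{x}_k,t_k)]$; $\mathbf{x}(t)=\mathbf{x}_k+\dot{\mathbf{x}}_k(t-t_k)$ for $t\in[t_k,t_{k+1}]$; $V(t)=\tfrac12\|\nabla_{\mathbf{x}} f(\mathbf{x}(t),t)\|_2^2$; $t_{k+1}$ is the smallest $t>t_k$ with $\phi_k(t)=0$; and $\mathbf{x}_{k+1}=\mathbf{x}_k+\dot{\mathbf{x}}_k(t_{k+1}-t_k)$.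 Here $\phi_k$ is either (for all $k$) $$\phi_k(t)=\tfrac12 a_kb_k(t-t_k)^2+\big(a_k^2+b_k\sqrt{2V(t_k)}\big)(t-t_k)-2\alpha V(t_k)$$ or (for all $k$) $$\phi_k(t)=\tfrac12 b_k^2(t-t_k)^3+\tfrac32\alpha\sqrt{2V(t_k)}\,b_k(t-t_k)^2+\big(\sqrt{2V(t_k)}\,b_k+2\alpha^2V(t_k)\big)(t-t_k)-2\alpha V(t_k),$$ with $a_k=C_{xx}\|\dot{\mathbf{x}}_k\|_2+C_{xt}$ and $b_k=(C_{xxx}\|\dot{\mathbf{x}}_k\|_1+2C_{xxt})\|\dot{\mathbf{x}}_k\|_2+C_{xtt}$. Assume $V(t_k)>0$ for every $k$ (so that each $t_{k+1}$ is well defined). Then $V(t_{k+1})<V(t_k)$ for every $k\in\mathbb{Z}_+$, and $\lim_{k\to\infty}V(t_k)=0$.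
   Context: $\nabla_{\mathbf{x}} f$ is the gradient in $\mathbf{x}$, $\nabla_{\mathbf{x}\mathbf{x}} f$ the Hessian in $\mathbf{x}$, $\nabla_{\mathbf{x}t} f=\frac{\partial}{\partial t}\nabla_{\mathbf{x}} f$, $\nabla_{\mathbf{x}\mathbf{x}t} f=\frac{\partial}{\partial t}\nabla_{\mathbf{x}\mathbf{x}} f$, $\nabla_{\mathbf{x}tt} f=\frac{\partial^2}{\partial t^2}\nabla_{\mathbf{x}} f$, $\nabla_{\mathbf{x}\mathbf{x}\mathbf{x}_i} f=\frac{\partial}{\partial \mathbf{x}_i}\nabla_{\mathbf{x}\mathbf{x}} f$. Matrix norms are spectral norms; $\|\cdot\|_1$ is the vector one-norm. When the cubic choice of $\phi_k$ is used, only the constants $C_{xxx},C_{xxt},C_{xtt}$ enter. *)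

theory Defs
  imports "HOL-Analysis.Analysis"
begin

text \<open>Functions f(x,t) on R^n x R_+ are represented curried, f :: real^'n => real => real,
  and only considered for t >= 0. A direction is Some i (partial in x_i) or None (partial in t).
  The t-partial is taken within {0..}, i.e. one-sided at t = 0.\<close>

definition pd :: "'n option \<Rightarrow> (real^'n \<Rightarrow> real \<Rightarrow> real) \<Rightarrow> real^'n \<Rightarrow> real \<Rightarrow> real" where
  "pd d g x t = (case d of
      Some i \<Rightarrow> vector_derivative (\<lambda>s. g (x + s *\<^sub>R axis i 1) t) (at 0)
    | None \<Rightarrow> vector_derivative (\<lambda>s. g x s) (at t within {0..}))"

definition has_pd :: "'n option \<Rightarrow> (real^'n \<Rightarrow> real \<Rightarrow> real) \<Rightarrow> real^'n \<Rightarrow> real \<Rightarrow> bool" where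
  "has_pd d g x t = (case d of
      Some i \<Rightarrow> (\<lambda>s. g (x + s *\<^sub>R axis i 1) t) differentiable (at 0)
    | None \<Rightarrow> (\<lambda>s. g x s) differentiable (at t within {0..}))"

definition C3_time :: "(real^'n \<Rightarrow> real \<Rightarrow> real) \<Rightarrow> bool" where
  "C3_time f \<longleftrightarrow>
     (\<forall>ds. length ds \<le> 3 \<longrightarrow>
        continuous_on (UNIV \<times> {0..}) (\<lambda>(x,t). foldr pd ds f x t)) \<and>
     (\<forall>ds. length ds < 3 \<longrightarrow> (\<forall>d x t. 0 \<le> t \<longrightarrow> has_pd d (foldr pd ds f) x t))"

definition grad_x :: "(real^'n \<Rightarrow> real \<Rightarrow> real) \<Rightarrow> real^'n \<Rightarrow> real \<Rightarrow> real^'n" where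
  "grad_x f x t = (\<chi> i. pd (Some i) f x t)"

definition hess_xx :: "(real^'n \<Rightarrow> real \<Rightarrow> real) \<Rightarrow> real^'n \<Rightarrow> real \<Rightarrow> real^'n^'n" where
  "hess_xx f x t = (\<chi> i j. pd (Some j) (pd (Some i) f) x t)"

definition grad_xt :: "(real^'n \<Rightarrow> real \<Rightarrow> real) \<Rightarrow> real^'n \<Rightarrow> real \<Rightarrow> real^'n" where
  "grad_xt f x t = (\<chi> i. pd None (pd (Some i) f) x t)"

definition grad_xtt :: "(real^'n \<Rightarrow> real \<Rightarrow> real) \<Rightarrow> real^'n \<Rightarrow> real \<Rightarrow> real^'n" where
  "grad_xtt f x t = (\<chi> i. pd None (pd None (pd (Some i) f)) x t)"

definition hess_xxt :: "(real^'n \<Rightarrow> real \<Rightarrow> real) \<Rightarrow> real^'n \<Rightarrow> real \<Rightarrow> real^'n^'n" where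
  "hess_xxt f x t = (\<chi> i j. pd None (pd (Some j) (pd (Some i) f)) x t)"

definition hess_xxx :: "(real^'n \<Rightarrow> real \<Rightarrow> real) \<Rightarrow> 'n \<Rightarrow> real^'n \<Rightarrow> real \<Rightarrow> real^'n^'n" where
  "hess_xxx f k x t = (\<chi> i j. pd (Some k) (pd (Some j) (pd (Some i) f)) x t)"

definition spec_norm :: "real^'n^'m \<Rightarrow> real" where
  "spec_norm A = onorm (\<lambda>v. A *v v)"

definition norm1 :: "real^'n \<Rightarrow> real" where
  "norm1 v = (\<Sum>i\<in>UNIV. \<bar>v $ i\<bar>)"

definition psd :: "real^'n^'n \<Rightarrow> bool" where
  "psd A \<longleftrightarrow> (\<forall>v. 0 \<le> v \<bullet> (A *v v))"

definition xdot :: "(real^'n \<Rightarrow> real \<Rightarrow> real) \<Rightarrow> real \<Rightarrow> real^'n \<Rightarrow> real \<Rightarrow> real^'n" where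
  "xdot f \<alpha> x t = - (matrix_inv (hess_xx f x t) *v (\<alpha> *\<^sub>R grad_x f x t + grad_xt f x t))"

definition Vf :: "(real^'n \<Rightarrow> real \<Rightarrow> real) \<Rightarrow> real^'n \<Rightarrow> real \<Rightarrow> real" where
  "Vf f x t = 1/2 * (norm (grad_x f x t))^2"

definition traj :: "(real^'n \<Rightarrow> real \<Rightarrow> real) \<Rightarrow> real \<Rightarrow> real^'n \<Rightarrow> real \<Rightarrow> real \<Rightarrow> real^'n" where
  "traj f \<alpha> xk tk t = xk + (t - tk) *\<^sub>R xdot f \<alpha> xk tk"

definition Vtraj :: "(real^'n \<Rightarrow> real \<Rightarrow> real) \<Rightarrow> real \<Rightarrow> real^'n \<Rightarrow> real \<Rightarrow> real \<Rightarrow> real" where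
  "Vtraj f \<alpha> xk tk t = Vf f (traj f \<alpha> xk tk t) t"

definition phi :: "bool \<Rightarrow> real \<Rightarrow> real \<Rightarrow> real \<Rightarrow> real \<Rightarrow> real \<Rightarrow> real \<Rightarrow>
    (real^'n \<Rightarrow> real \<Rightarrow> real) \<Rightarrow> real^'n \<Rightarrow> real \<Rightarrow> real \<Rightarrow> real" where
  "phi cubic Cxx Cxt Cxxx Cxxt Cxtt \<alpha> f xk tk t =
    (let xd = xdot f \<alpha> xk tk;
         V0 = Vtraj f \<alpha> xk tk tk;
         a = Cxx * norm xd + Cxt;
         b = (Cxxx * norm1 xd + 2 * Cxxt) * norm xd + Cxtt;
         s = t - tk
     in if cubic then
          1/2 * b^2 * s^3 + 3/2 * \<alpha> * sqrt (2 * V0) * b * s^2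
          + (sqrt (2 * V0) * b + 2 * \<alpha>^2 * V0) * s - 2 * \<alpha> * V0
        else
          1/2 * a * b * s^2 + (a^2 + b * sqrt (2 * V0)) * s - 2 * \<alpha> * V0)"

end

theory Submission
  imports Defs
begin

lemma axis_deriv:
  fixes h :: "real^'n \<Rightarrow> real \<Rightarrow> real"
  assumes "\<And>s. has_pd (Some j) h (y0 + s *\<^sub>R axis j 1) t"
  shows "((\<lambda>s. h (y0 + s *\<^sub>R axis j 1) t) has_real_derivative pd (Some j) h (y0 + s0 *\<^sub>R axis j 1) t) (at s0)"
proof -
  let ?y = "y0 + s0 *\<^sub>R axis j 1"
  have "(\<lambda>s. h (?y + s *\<^sub>R axis j 1) t) differentiable (at 0)" using assms[of s0] by (simp add: has_pd_def)
  hence "((\<lambda>s. h (?y + s *\<^sub>R axis j 1) t) has_vector_derivative pd (Some j) h ?y t) (at 0)"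
    unfolding pd_def by (simp add: vector_derivative_works)
  hence G: "((\<lambda>s. h (?y + s *\<^sub>R axis j 1) t) has_real_derivative pd (Some j) h ?y t) (at 0)"
    by (simp add: has_real_derivative_iff_has_vector_derivative)
  have eq: "(\<lambda>x. h (y0 + (x + s0) *\<^sub>R axis j 1) t) = (\<lambda>s. h (?y + s *\<^sub>R axis j 1) t)"
    by (rule ext) (simp add: algebra_simps scaleR_add_left)
  have "((\<lambda>s. h (y0 + s *\<^sub>R axis j 1) t) has_real_derivative pd (Some j) h ?y t) (at (0 + s0))"
    unfolding DERIV_shift eq using G .
  thus ?thesis by simp
qed

lemma mvt_within:
  fixes F :: "real \<Rightarrow> real"
  assumes "a < b" and d: "\<And>u. a \<le> u \<Longrightarrow> u \<le> b \<Longrightarrow> (F has_real_derivative F' u) (at u within {a..})"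
  shows "\<exists>z. a < z \<and> z < b \<and> F b - F a = (b - a) * F' z"
proof -
  have c: "continuous_on {a..b} F"
    unfolding continuous_on_eq_continuous_within
  proof
    fix u assume "u \<in> {a..b}"
    then have "continuous (at u within {a..}) F" by (intro DERIV_continuous[OF d]) auto
    then show "continuous (at u within {a..b}) F"
      by (rule continuous_within_subset) auto
  qed
  have da: "(F has_real_derivative F' u) (at u)" if "a < u" "u < b" for u
  proof -
    have "at u within {a..} = at u"
      by (rule at_within_interior) (use that in auto)
    then show ?thesis using d[of u] that by simp
  qed
  obtain l z where z: "a < z" "z < b" "DERIV F z :> l" "F b - F a = (b - a) * l"
    using MVT[OF assms(1) c] da real_differentiable_def by blast
  then have "l = F' z" using da[of z] DERIV_unique by blast
  then show ?thesis using z by blast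
qed


lemma axis_incr:
  fixes h :: "real^'n \<Rightarrow> real \<Rightarrow> real"
  assumes ex: "\<And>s. has_pd (Some j) h (y0 + s *\<^sub>R axis j 1) t"
   and bd: "\<And>s. \<bar>s\<bar> \<le> \<bar>w\<bar> \<Longrightarrow> \<bar>pd (Some j) h (y0 + s *\<^sub>R axis j 1) t - c\<bar> \<le> \<epsilon>"
  shows "\<bar>h (y0 + w *\<^sub>R axis j 1) t - h y0 t - w * c\<bar> \<le> \<epsilon> * \<bar>w\<bar>"
proof -
  define F where "F = (\<lambda>s. h (y0 + s *\<^sub>R axis j 1) t - c * s)"
  define F' where "F' = (\<lambda>s. pd (Some j) h (y0 + s *\<^sub>R axis j 1) t - c)"
  have D: "(F has_real_derivative F' s) (at s)" for s
    unfolding F_def F'_def by (intro DERIV_diff axis_deriv[OF ex] DERIV_cmult_Id)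
  have Fw: "F w - F 0 = h (y0 + w *\<^sub>R axis j 1) t - h y0 t - w * c"
    unfolding F_def by (simp add: mult.commute)
  have key: "\<bar>F w - F 0\<bar> \<le> \<epsilon> * \<bar>w\<bar>"
  proof -
    consider "w = 0" | "w > 0" | "w < 0" by linarith
    then show ?thesis
    proof cases
      case 1 then show ?thesis by simp
    next
      case 2
      from MVT2[OF 2, of F F'] D obtain z where z: "0 < z" "z < w" "F w - F 0 = (w - 0) * F' z"
        by blast
      have "\<bar>F' z\<bar> \<le> \<epsilon>" unfolding F'_def using bd[of z] z by simp
      then have "\<bar>w\<bar> * \<bar>F' z\<bar> \<le> \<bar>w\<bar> * \<epsilon>" by (rule mult_left_mono) simp
      then show ?thesis using z(3) by (simp add: abs_mult mult.commute)
    next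
      case 3
      from MVT2[OF 3, of F F'] D obtain z where z: "w < z" "z < 0" "F 0 - F w = (0 - w) * F' z"
        by blast
      have "\<bar>F' z\<bar> \<le> \<epsilon>" unfolding F'_def using bd[of z] z by simp
      then have "\<bar>w\<bar> * \<bar>F' z\<bar> \<le> \<bar>w\<bar> * \<epsilon>" by (rule mult_left_mono) simp
      moreover have "\<bar>F w - F 0\<bar> = \<bar>w\<bar> * \<bar>F' z\<bar>" using z(3)
        by (metis abs_minus_commute abs_mult abs_minus_cancel diff_0)
      ultimately show ?thesis by (simp add: mult.commute)
    qed
  qed
  then show ?thesis unfolding Fw .
qed


definition prj :: "'n set \<Rightarrow> real^'n \<Rightarrow> real^'n" where
  "prj S w = (\<chi> i. if i \<in> S then w$i else 0)"

lemma tele: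
  fixes h :: "real^'n \<Rightarrow> real \<Rightarrow> real"
  assumes ex: "\<And>i y. has_pd (Some i) h y t"
    and bd: "\<And>i y. norm (y - x) \<le> norm w \<Longrightarrow> \<bar>pd (Some i) h y t - c i\<bar> \<le> \<epsilon>"
  shows "\<bar>h (x + prj S w) t - h x t - (\<Sum>i\<in>S. w$i * c i)\<bar> \<le> \<epsilon> * (\<Sum>i\<in>S. \<bar>w$i\<bar>)"
proof -
  have "finite S" by simp
  then show ?thesis
  proof (induction S rule: finite_induct)
    case empty
    have "prj {} w = 0" by (simp add: prj_def vec_eq_iff)
    then show ?case by simp
  next
    case (insert j S)
    have P: "prj (insert j S) w = prj S w + w$j *\<^sub>R axis j 1"
      using insert(2) by (auto simp: prj_def vec_eq_iff axis_def)
    have inc: "\<bar>h ((x + prj S w) + w$j *\<^sub>R axis j 1) t - h (x + prj S w) t - w$j * c j\<bar> \<le> \<epsilon> * \<bar>w$j\<bar>"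
    proof (rule axis_incr[OF ex])
      fix s :: real assume s: "\<bar>s\<bar> \<le> \<bar>w$j\<bar>"
      have "norm (x + prj S w + s *\<^sub>R axis j 1 - x) \<le> norm w"
      proof (rule norm_le_componentwise_cart)
        fix i show "norm ((x + prj S w + s *\<^sub>R axis j 1 - x) $ i) \<le> norm (w $ i)"
          using s insert(2) by (auto simp: prj_def axis_def)
      qed
      then show "\<bar>pd (Some j) h (x + prj S w + s *\<^sub>R axis j 1) t - c j\<bar> \<le> \<epsilon>" by (rule bd)
    qed
    have s1: "(\<Sum>i\<in>insert j S. w$i * c i) = w$j * c j + (\<Sum>i\<in>S. w$i * c i)"
      using insert by auto
    have s2: "(\<Sum>i\<in>insert j S. \<bar>w$i\<bar>) = \<bar>w$j\<bar> + (\<Sum>i\<in>S. \<bar>w$i\<bar>)" using insert by auto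
    have xe: "x + prj (insert j S) w = (x + prj S w) + w$j *\<^sub>R axis j 1"
      unfolding P by (simp only: add.assoc)
    have "\<bar>h (x + prj (insert j S) w) t - h x t - (\<Sum>i\<in>insert j S. w$i * c i)\<bar>
       \<le> \<bar>h ((x + prj S w) + w$j *\<^sub>R axis j 1) t - h (x + prj S w) t - w$j * c j\<bar>
         + \<bar>h (x + prj S w) t - h x t - (\<Sum>i\<in>S. w$i * c i)\<bar>"
      unfolding xe s1 by linarith
    also have "\<dots> \<le> \<epsilon> * \<bar>w$j\<bar> + \<epsilon> * (\<Sum>i\<in>S. \<bar>w$i\<bar>)"
      using inc insert(3) by linarith
    finally show ?case unfolding s2 by (simp only: distrib_left)
  qed
qed


lemma dist_pair_le: "dist (a,b) (c,d) \<le> dist a c + dist b d"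
  unfolding dist_Pair_Pair
  by (rule real_le_lsqrt) (auto simp: power2_eq_square algebra_simps)

lemma pd_None_deriv:
  assumes "has_pd None h x t" "0 \<le> t0" 
  shows "((\<lambda>s. h x s) has_real_derivative pd None h x t) (at t within {t0..})"
proof -
  have "((\<lambda>s. h x s) has_vector_derivative pd None h x t) (at t within {0..})"
    using assms(1) unfolding pd_def has_pd_def by (simp add: vector_derivative_works)
  then have "((\<lambda>s. h x s) has_real_derivative pd None h x t) (at t within {0..})"
    by (simp add: has_real_derivative_iff_has_vector_derivative)
  then show ?thesis by (rule DERIV_subset) (use assms(2) in auto)
qed

lemma chain_path:
  fixes h :: "real^'n \<Rightarrow> real \<Rightarrow> real"
  assumes hx: "\<And>i x t. 0 \<le> t \<Longrightarrow> has_pd (Some i) h x t"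
    and ht: "\<And>x t. 0 \<le> t \<Longrightarrow> has_pd None h x t"
    and cx: "\<And>i. continuous_on (UNIV \<times> {0..}) (\<lambda>(x,t). pd (Some i) h x t)"
    and t0: "0 \<le> t0" and u1: "t0 \<le> u1"
  shows "((\<lambda>u. h (x0 + (u - t0) *\<^sub>R v) u) has_real_derivative
          (\<Sum>i\<in>UNIV. v$i * pd (Some i) h (x0 + (u1 - t0) *\<^sub>R v) u1) + pd None h (x0 + (u1 - t0) *\<^sub>R v) u1)
          (at u1 within {t0..})"
proof -
  define p where "p = (\<lambda>u. x0 + (u - t0) *\<^sub>R v)"
  define y1 where "y1 = p u1"
  define c where "c = (\<lambda>i. pd (Some i) h y1 u1)"
  define D where "D = (\<Sum>i\<in>UNIV. v$i * c i)"
  define N where "N = (\<Sum>i\<in>UNIV. \<bar>v$i\<bar>)"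
  have nv: "0 < norm v + 1" by (simp add: add_nonneg_pos)
  have N0: "0 \<le> N" unfolding N_def by (simp add: sum_nonneg)
  have B: "((\<lambda>u. h y1 u) has_real_derivative pd None h y1 u1) (at u1 within {t0..})"
    by (rule pd_None_deriv[OF ht t0]) (use t0 u1 in auto)
  have A: "((\<lambda>u. h (p u) u - h y1 u) has_real_derivative D) (at u1 within {t0..})"
    unfolding has_field_derivative_def has_derivative_within_alt
  proof (intro conjI allI impI)
    show "bounded_linear ((*) D)" by (rule bounded_linear_mult_right)
  next
    fix e :: real assume e: "0 < e"
    define \<epsilon> where "\<epsilon> = e / (N + 1)"
    have \<epsilon>0: "0 < \<epsilon>" using e N0 unfolding \<epsilon>_def by simp
    have "\<forall>i. \<exists>d>0. \<forall>z\<in>UNIV \<times> {0..}. dist z (y1, u1) < d \<longrightarrow>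
            dist ((\<lambda>(x,t). pd (Some i) h x t) z) ((\<lambda>(x,t). pd (Some i) h x t) (y1,u1)) < \<epsilon>"
    proof
      fix i
      have "(y1, u1) \<in> UNIV \<times> {0..}" using t0 u1 by auto
      then show "\<exists>d>0. \<forall>z\<in>UNIV \<times> {0..}. dist z (y1, u1) < d \<longrightarrow>
            dist ((\<lambda>(x,t). pd (Some i) h x t) z) ((\<lambda>(x,t). pd (Some i) h x t) (y1,u1)) < \<epsilon>"
        using cx[of i] \<epsilon>0 unfolding continuous_on_iff by blast
    qed
    then obtain d where d: "\<And>i. d i > 0" and
      dd: "\<And>i z. z \<in> UNIV \<times> {0..} \<Longrightarrow> dist z (y1, u1) < d i \<Longrightarrow>
            dist ((\<lambda>(x,t). pd (Some i) h x t) z) ((\<lambda>(x,t). pd (Some i) h x t) (y1,u1)) < \<epsilon>"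
      by metis
    define \<delta> where "\<delta> = Min (range d)"
    have \<delta>0: "0 < \<delta>" unfolding \<delta>_def using d by (simp add: Min_gr_iff)
    have \<delta>le: "\<delta> \<le> d i" for i unfolding \<delta>_def by simp
    show "\<exists>d>0. \<forall>y\<in>{t0..}. norm (y - u1) < d \<longrightarrow>
           norm ((h (p y) y - h y1 y) - (h (p u1) u1 - h y1 u1) - D * (y - u1)) \<le> e * norm (y - u1)"
    proof (intro exI conjI ballI impI)
      show "0 < \<delta> / (norm v + 1)" using \<delta>0 nv by simp
    next
      fix u assume u: "u \<in> {t0..}" and un: "norm (u - u1) < \<delta> / (norm v + 1)"
      define w where "w = (u - u1) *\<^sub>R v"
      have pu: "p u = y1 + w" unfolding p_def y1_def w_def by (simp add: algebra_simps)
      have u0: "0 \<le> u" using u t0 by auto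
      have T: "\<bar>h (y1 + prj UNIV w) u - h y1 u - (\<Sum>i\<in>UNIV. w$i * c i)\<bar> \<le> \<epsilon> * (\<Sum>i\<in>UNIV. \<bar>w$i\<bar>)"
      proof (rule tele)
        show "has_pd (Some i) h y u" for i y using hx u0 by blast
      next
        fix i y assume y: "norm (y - y1) \<le> norm w"
        have "dist (y, u) (y1, u1) \<le> dist y y1 + dist u u1" by (rule dist_pair_le)
        also have "\<dots> \<le> \<bar>u - u1\<bar> * norm v + \<bar>u - u1\<bar>"
          using y by (simp add: dist_norm w_def)
        also have "\<dots> = \<bar>u - u1\<bar> * (norm v + 1)" by (simp add: algebra_simps)
        also have "\<dots> < \<delta>" using un nv by (simp add: pos_less_divide_eq)
        finally have "dist (y, u) (y1, u1) < d i" using \<delta>le[of i] by linarith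
        then have "dist (pd (Some i) h y u) (c i) < \<epsilon>" using dd[of "(y,u)" i] u0 unfolding c_def by auto
        then show "\<bar>pd (Some i) h y u - c i\<bar> \<le> \<epsilon>" by (simp add: dist_real_def)
      qed
      have prjU: "prj UNIV w = w" by (simp add: prj_def vec_eq_iff)
      have s1: "(\<Sum>i\<in>UNIV. w$i * c i) = (u - u1) * D"
        unfolding D_def w_def by (simp add: sum_distrib_left mult.assoc)
      have s2: "(\<Sum>i\<in>UNIV. \<bar>w$i\<bar>) = \<bar>u - u1\<bar> * N"
        unfolding N_def w_def by (simp add: sum_distrib_left abs_mult)
      have "\<epsilon> * (\<bar>u - u1\<bar> * N) \<le> e * \<bar>u - u1\<bar>"
      proof -
        have "\<epsilon> * N \<le> e" unfolding \<epsilon>_def using e N0 by (simp add: field_simps)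
        then have "\<bar>u - u1\<bar> * (\<epsilon> * N) \<le> \<bar>u - u1\<bar> * e" by (rule mult_left_mono) simp
        then show ?thesis by (simp add: algebra_simps)
      qed
      then show "norm ((h (p u) u - h y1 u) - (h (p u1) u1 - h y1 u1) - D * (u - u1)) \<le> e * norm (u - u1)"
        using T unfolding prjU s1 s2 pu[symmetric] by (simp add: y1_def[symmetric] mult.commute)
    qed
  qed
  have "((\<lambda>u. (h (p u) u - h y1 u) + h y1 u) has_real_derivative D + pd None h y1 u1) (at u1 within {t0..})"
    by (rule DERIV_add[OF A B])
  then show ?thesis unfolding p_def y1_def D_def c_def by simp
qed


lemma cont_at_pt:
  fixes F :: "real^'n \<Rightarrow> real \<Rightarrow> real"
  assumes "continuous_on (UNIV \<times> {0..}) (\<lambda>(x,t). F x t)" "0 \<le> t" "0 < e"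
  shows "\<exists>d>0. \<forall>y \<tau>. 0 \<le> \<tau> \<longrightarrow> dist (y, \<tau>) (x, t) < d \<longrightarrow> \<bar>F y \<tau> - F x t\<bar> < e"
proof -
  have "(x, t) \<in> UNIV \<times> {0..}" using assms(2) by auto
  then obtain d where "d > 0" "\<forall>z\<in>UNIV \<times> {0..}. dist z (x, t) < d \<longrightarrow>
       dist ((\<lambda>(x,t). F x t) z) ((\<lambda>(x,t). F x t) (x,t)) < e"
    using assms(1,3) unfolding continuous_on_iff by blast
  then show ?thesis by (auto simp: dist_real_def)
qed

lemma clairaut:
  fixes g :: "real^'n \<Rightarrow> real \<Rightarrow> real"
  assumes gk: "\<And>x t. 0 \<le> t \<Longrightarrow> has_pd (Some k) g x t"
    and gt: "\<And>x t. 0 \<le> t \<Longrightarrow> has_pd None g x t"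
    and gtk: "\<And>x t. 0 \<le> t \<Longrightarrow> has_pd None (pd (Some k) g) x t"
    and gkt: "\<And>x t. 0 \<le> t \<Longrightarrow> has_pd (Some k) (pd None g) x t"
    and c1: "continuous_on (UNIV \<times> {0..}) (\<lambda>(x,t). pd None (pd (Some k) g) x t)"
    and c2: "continuous_on (UNIV \<times> {0..}) (\<lambda>(x,t). pd (Some k) (pd None g) x t)"
    and t: "0 \<le> t"
  shows "pd (Some k) (pd None g) x t = pd None (pd (Some k) g) x t"
proof (rule ccontr)
  define C1 where "C1 = pd None (pd (Some k) g) x t"
  define C2 where "C2 = pd (Some k) (pd None g) x t"
  assume ne0: "pd (Some k) (pd None g) x t \<noteq> pd None (pd (Some k) g) x t"
  hence ne: "C2 \<noteq> C1" by (simp add: C1_def C2_def)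
  define \<delta> where "\<delta> = \<bar>C1 - C2\<bar> / 2"
  have \<delta>0: "0 < \<delta>" using ne unfolding \<delta>_def by simp
  obtain d1 where d1: "d1 > 0" "\<And>y \<tau>. 0 \<le> \<tau> \<Longrightarrow> dist (y, \<tau>) (x, t) < d1 \<Longrightarrow>
     \<bar>pd None (pd (Some k) g) y \<tau> - C1\<bar> < \<delta>"
    using cont_at_pt[OF c1 t \<delta>0] unfolding C1_def by blast
  obtain d2 where d2: "d2 > 0" "\<And>y \<tau>. 0 \<le> \<tau> \<Longrightarrow> dist (y, \<tau>) (x, t) < d2 \<Longrightarrow>
     \<bar>pd (Some k) (pd None g) y \<tau> - C2\<bar> < \<delta>"
    using cont_at_pt[OF c2 t \<delta>0] unfolding C2_def by blast
  define s where "s = min d1 d2 / 4"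
  have s0: "0 < s" using d1 d2 unfolding s_def by simp
  let ?e = "axis k (1::real)"
  define \<Delta> where "\<Delta> = g (x + s *\<^sub>R ?e) (t + s) - g (x + s *\<^sub>R ?e) t - g x (t + s) + g x t"
  have close: "dist (x + \<sigma> *\<^sub>R ?e, \<tau>) (x, t) < min d1 d2"
    if "0 \<le> \<sigma>" "\<sigma> \<le> s" "t \<le> \<tau>" "\<tau> \<le> t + s" for \<sigma> \<tau>
  proof -
    have "dist (x + \<sigma> *\<^sub>R ?e, \<tau>) (x, t) \<le> dist (x + \<sigma> *\<^sub>R ?e) x + dist \<tau> t" by (rule dist_pair_le)
    also have "\<dots> \<le> s + s" using that by (simp add: dist_norm)
    also have "\<dots> < min d1 d2" using s0 unfolding s_def by linarith
    finally show ?thesis .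
  qed
  obtain Q1 where Q1: "\<Delta> = s * (s * Q1)" "\<bar>Q1 - C1\<bar> < \<delta>"
  proof -
    define \<phi> where "\<phi> = (\<lambda>\<sigma>. g (x + \<sigma> *\<^sub>R ?e) (t + s) - g (x + \<sigma> *\<^sub>R ?e) t)"
    have D\<phi>: "(\<phi> has_real_derivative (pd (Some k) g (x + \<sigma> *\<^sub>R ?e) (t + s) - pd (Some k) g (x + \<sigma> *\<^sub>R ?e) t)) (at \<sigma>)" for \<sigma>
      unfolding \<phi>_def using t s0 by (intro DERIV_diff axis_deriv gk) auto
    from MVT2[OF s0, of \<phi> "\<lambda>\<sigma>. pd (Some k) g (x + \<sigma> *\<^sub>R ?e) (t + s) - pd (Some k) g (x + \<sigma> *\<^sub>R ?e) t"] D\<phi> obtain \<sigma> where \<sigma>: "0 < \<sigma>" "\<sigma> < s"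
      "\<phi> s - \<phi> 0 = (s - 0) * (pd (Some k) g (x + \<sigma> *\<^sub>R ?e) (t + s) - pd (Some k) g (x + \<sigma> *\<^sub>R ?e) t)"
      by blast
    define \<psi> where "\<psi> = (\<lambda>\<tau>. pd (Some k) g (x + \<sigma> *\<^sub>R ?e) \<tau>)"
    have D\<psi>: "(\<psi> has_real_derivative pd None (pd (Some k) g) (x + \<sigma> *\<^sub>R ?e) \<tau>) (at \<tau> within {t..})"
      if "t \<le> \<tau>" for \<tau>
      unfolding \<psi>_def by (rule pd_None_deriv[OF gtk t]) (use t that in auto)
    have ts: "t < t + s" using s0 by simp
    from mvt_within[OF ts, of \<psi> "\<lambda>\<tau>. pd None (pd (Some k) g) (x + \<sigma> *\<^sub>R ?e) \<tau>"] D\<psi> obtain \<tau> where \<tau>: "t < \<tau>" "\<tau> < t + s"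
      "\<psi> (t + s) - \<psi> t = (t + s - t) * pd None (pd (Some k) g) (x + \<sigma> *\<^sub>R ?e) \<tau>"
      by blast
    show ?thesis
    proof (rule that)
      show "\<Delta> = s * (s * pd None (pd (Some k) g) (x + \<sigma> *\<^sub>R ?e) \<tau>)"
        using \<sigma>(3) \<tau>(3) unfolding \<Delta>_def \<phi>_def \<psi>_def by (simp add: algebra_simps)
      show "\<bar>pd None (pd (Some k) g) (x + \<sigma> *\<^sub>R ?e) \<tau> - C1\<bar> < \<delta>"
        using d1(2) close[of \<sigma> \<tau>] \<sigma> \<tau> t by auto
    qed
  qed
  obtain Q2 where Q2: "\<Delta> = s * (s * Q2)" "\<bar>Q2 - C2\<bar> < \<delta>"
  proof -
    define \<zeta> where "\<zeta> = (\<lambda>\<tau>. g (x + s *\<^sub>R ?e) \<tau> - g x \<tau>)"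
    have D\<zeta>: "(\<zeta> has_real_derivative (pd None g (x + s *\<^sub>R ?e) \<tau> - pd None g x \<tau>)) (at \<tau> within {t..})"
      if "t \<le> \<tau>" for \<tau>
      unfolding \<zeta>_def using t that by (intro DERIV_diff pd_None_deriv gt) auto
    have ts: "t < t + s" using s0 by simp
    from mvt_within[OF ts, of \<zeta> "\<lambda>\<tau>. pd None g (x + s *\<^sub>R ?e) \<tau> - pd None g x \<tau>"] D\<zeta> obtain \<tau> where \<tau>: "t < \<tau>" "\<tau> < t + s"
      "\<zeta> (t + s) - \<zeta> t = (t + s - t) * (pd None g (x + s *\<^sub>R ?e) \<tau> - pd None g x \<tau>)"
      by blast
    define \<eta> where "\<eta> = (\<lambda>\<sigma>. pd None g (x + \<sigma> *\<^sub>R ?e) \<tau>)"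
    have D\<eta>: "(\<eta> has_real_derivative pd (Some k) (pd None g) (x + \<sigma> *\<^sub>R ?e) \<tau>) (at \<sigma>)" for \<sigma>
      unfolding \<eta>_def using t \<tau> by (intro axis_deriv gkt) auto
    from MVT2[OF s0, of \<eta> "\<lambda>\<sigma>. pd (Some k) (pd None g) (x + \<sigma> *\<^sub>R ?e) \<tau>"] D\<eta> obtain \<sigma> where \<sigma>: "0 < \<sigma>" "\<sigma> < s"
      "\<eta> s - \<eta> 0 = (s - 0) * pd (Some k) (pd None g) (x + \<sigma> *\<^sub>R ?e) \<tau>"
      by blast
    show ?thesis
    proof (rule that)
      show "\<Delta> = s * (s * pd (Some k) (pd None g) (x + \<sigma> *\<^sub>R ?e) \<tau>)"
        using \<sigma>(3) \<tau>(3) unfolding \<Delta>_def \<zeta>_def \<eta>_def by (simp add: algebra_simps)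
      show "\<bar>pd (Some k) (pd None g) (x + \<sigma> *\<^sub>R ?e) \<tau> - C2\<bar> < \<delta>"
        using d2(2) close[of \<sigma> \<tau>] \<sigma> \<tau> t by auto
    qed
  qed
  have "Q1 = Q2" using Q1(1) Q2(1) s0 by simp
  then have "\<bar>C1 - C2\<bar> < 2 * \<delta>" using Q1(2) Q2(2) by linarith
  then show False unfolding \<delta>_def by simp
qed


lemma vec_deriv_componentwise:
  fixes F :: "real \<Rightarrow> real^'n"
  assumes "\<And>i. ((\<lambda>u. F u $ i) has_real_derivative F' $ i) (at u within S)"
  shows "(F has_vector_derivative F') (at u within S)"
  unfolding has_vector_derivative_def
  apply (subst has_derivative_componentwise_within)
  apply (clarsimp simp: Basis_vec_def inner_axis)
proof -
  fix i
  have e: "(\<lambda>x. x * F' $ i) = (*) (F' $ i)" by (rule ext) (simp add: mult.commute)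
  show "((\<lambda>x. F x $ i) has_derivative (\<lambda>x. x * F' $ i)) (at u within S)"
    using assms[of i] unfolding has_field_derivative_def e .
qed

lemma alg3:
  fixes v :: "'n::finite \<Rightarrow> real"
  shows "(\<Sum>j\<in>UNIV. ((\<Sum>k\<in>UNIV. v k * A k j) + B j) * v j) + ((\<Sum>k\<in>UNIV. v k * B k) + C)
    = (\<Sum>k\<in>UNIV. v k * (\<Sum>j\<in>UNIV. A k j * v j)) + 2 * (\<Sum>j\<in>UNIV. B j * v j) + C"
proof -
  have 1: "(\<Sum>j\<in>UNIV. ((\<Sum>k\<in>UNIV. v k * A k j) + B j) * v j)
      = (\<Sum>j\<in>UNIV. \<Sum>k\<in>UNIV. v k * A k j * v j) + (\<Sum>j\<in>UNIV. B j * v j)"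
    by (simp add: distrib_right sum.distrib sum_distrib_right)
  have 2: "(\<Sum>j\<in>UNIV. \<Sum>k\<in>UNIV. v k * A k j * v j) = (\<Sum>k\<in>UNIV. \<Sum>j\<in>UNIV. v k * A k j * v j)"
    by (rule sum.swap)
  have 3: "(\<Sum>k\<in>UNIV. \<Sum>j\<in>UNIV. v k * A k j * v j) = (\<Sum>k\<in>UNIV. v k * (\<Sum>j\<in>UNIV. A k j * v j))"
    by (simp add: sum_distrib_left mult.assoc)
  have 4: "(\<Sum>k\<in>UNIV. v k * B k) = (\<Sum>j\<in>UNIV. B j * v j)" by (simp add: mult.commute)
  show ?thesis unfolding 1 2 3 4 by simp
qed

context
  fixes f :: "real^'n \<Rightarrow> real \<Rightarrow> real"
  assumes smooth: "C3_time f"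
begin

lemma hp: "length ds < 3 \<Longrightarrow> 0 \<le> t \<Longrightarrow> has_pd d (foldr pd ds f) x t"
  using smooth unfolding C3_time_def by blast

lemma ct: "length ds \<le> 3 \<Longrightarrow> continuous_on (UNIV \<times> {0..}) (\<lambda>(x,t). foldr pd ds f x t)"
  using smooth unfolding C3_time_def by blast

lemma hp1: "0 \<le> t \<Longrightarrow> has_pd d (pd a f) x t"
  using hp[of "[a]"] by simp
lemma hp2: "0 \<le> t \<Longrightarrow> has_pd d (pd a (pd b f)) x t"
  using hp[of "[a,b]"] by simp
lemma ct2: "continuous_on (UNIV \<times> {0..}) (\<lambda>(x,t). pd a (pd b f) x t)"
  using ct[of "[a,b]"] by simp
lemma ct3: "continuous_on (UNIV \<times> {0..}) (\<lambda>(x,t). pd a (pd b (pd c f)) x t)"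
  using ct[of "[a,b,c]"] by simp

lemma swap_xt: "0 \<le> t \<Longrightarrow> pd (Some k) (pd None (pd (Some i) f)) x t = pd None (pd (Some k) (pd (Some i) f)) x t"
  by (rule clairaut) (auto intro: hp1 hp2 ct3)

lemma G_deriv:
  assumes "0 \<le> t0" "t0 \<le> u"
  shows "((\<lambda>u. grad_x f (x0 + (u - t0) *\<^sub>R v) u) has_vector_derivative
     (hess_xx f (x0 + (u - t0) *\<^sub>R v) u *v v + grad_xt f (x0 + (u - t0) *\<^sub>R v) u)) (at u within {t0..})"
proof (rule vec_deriv_componentwise)
  fix i
  have "((\<lambda>u. pd (Some i) f (x0 + (u - t0) *\<^sub>R v) u) has_real_derivative
          (\<Sum>j\<in>UNIV. v$j * pd (Some j) (pd (Some i) f) (x0 + (u - t0) *\<^sub>R v) u) + pd None (pd (Some i) f) (x0 + (u - t0) *\<^sub>R v) u)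
          (at u within {t0..})"
    by (rule chain_path) (auto intro: hp1 ct2 assms)
  then show "((\<lambda>u. grad_x f (x0 + (u - t0) *\<^sub>R v) u $ i) has_real_derivative
     (hess_xx f (x0 + (u - t0) *\<^sub>R v) u *v v + grad_xt f (x0 + (u - t0) *\<^sub>R v) u) $ i) (at u within {t0..})"
    by (simp add: grad_x_def hess_xx_def grad_xt_def matrix_vector_mult_def mult.commute)
qed

definition G2 :: "real^'n \<Rightarrow> real \<Rightarrow> real^'n \<Rightarrow> real^'n" where
  "G2 y u v = (\<Sum>k\<in>UNIV. v$k *\<^sub>R (hess_xxx f k y u *v v)) + 2 *\<^sub>R (hess_xxt f y u *v v) + grad_xtt f y u"

lemma G1_deriv:
  assumes t0: "0 \<le> t0" and u: "t0 \<le> u"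
  shows "((\<lambda>u. hess_xx f (x0 + (u - t0) *\<^sub>R v) u *v v + grad_xt f (x0 + (u - t0) *\<^sub>R v) u) has_vector_derivative
     G2 (x0 + (u - t0) *\<^sub>R v) u v) (at u within {t0..})"
proof (rule vec_deriv_componentwise)
  fix i
  let ?p = "x0 + (u - t0) *\<^sub>R v"
  have DH: "((\<lambda>u. pd (Some j) (pd (Some i) f) (x0 + (u - t0) *\<^sub>R v) u) has_real_derivative
          (\<Sum>k\<in>UNIV. v$k * pd (Some k) (pd (Some j) (pd (Some i) f)) ?p u) + pd None (pd (Some j) (pd (Some i) f)) ?p u)
          (at u within {t0..})" for j
    by (rule chain_path) (auto intro: hp2 ct3 assms)
  have DT: "((\<lambda>u. pd None (pd (Some i) f) (x0 + (u - t0) *\<^sub>R v) u) has_real_derivative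
          (\<Sum>k\<in>UNIV. v$k * pd (Some k) (pd None (pd (Some i) f)) ?p u) + pd None (pd None (pd (Some i) f)) ?p u)
          (at u within {t0..})"
    by (rule chain_path) (auto intro: hp2 ct3 assms)
  have D: "((\<lambda>u. (\<Sum>j\<in>UNIV. pd (Some j) (pd (Some i) f) (x0 + (u - t0) *\<^sub>R v) u * v$j) + pd None (pd (Some i) f) (x0 + (u - t0) *\<^sub>R v) u)
     has_real_derivative
     (\<Sum>j\<in>UNIV. ((\<Sum>k\<in>UNIV. v$k * pd (Some k) (pd (Some j) (pd (Some i) f)) ?p u) + pd None (pd (Some j) (pd (Some i) f)) ?p u) * v$j)
     + ((\<Sum>k\<in>UNIV. v$k * pd (Some k) (pd None (pd (Some i) f)) ?p u) + pd None (pd None (pd (Some i) f)) ?p u))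
     (at u within {t0..})"
    by (intro DERIV_add DERIV_sum DERIV_cmult_right DH DT)
  have u0: "0 \<le> u" using t0 u by linarith
  have eq: "(\<Sum>j\<in>UNIV. ((\<Sum>k\<in>UNIV. v$k * pd (Some k) (pd (Some j) (pd (Some i) f)) ?p u) + pd None (pd (Some j) (pd (Some i) f)) ?p u) * v$j)
     + ((\<Sum>k\<in>UNIV. v$k * pd (Some k) (pd None (pd (Some i) f)) ?p u) + pd None (pd None (pd (Some i) f)) ?p u)
     = G2 ?p u v $ i"
  proof -
    have a: "(\<Sum>k\<in>UNIV. v$k * pd (Some k) (pd None (pd (Some i) f)) ?p u) = (\<Sum>k\<in>UNIV. v$k * pd None (pd (Some k) (pd (Some i) f)) ?p u)"
      by (rule sum.cong) (simp_all only: swap_xt[OF u0])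
    have G2n: "G2 ?p u v $ i = (\<Sum>k\<in>UNIV. v$k * (\<Sum>j\<in>UNIV. pd (Some k) (pd (Some j) (pd (Some i) f)) ?p u * v$j))
       + 2 * (\<Sum>j\<in>UNIV. pd None (pd (Some j) (pd (Some i) f)) ?p u * v$j) + pd None (pd None (pd (Some i) f)) ?p u"
      by (simp add: G2_def hess_xxx_def hess_xxt_def grad_xtt_def matrix_vector_mult_def)
    show ?thesis unfolding a G2n
      by (rule alg3[where v="\<lambda>k. v$k" and A="\<lambda>k j. pd (Some k) (pd (Some j) (pd (Some i) f)) ?p u"
        and B="\<lambda>j. pd None (pd (Some j) (pd (Some i) f)) ?p u"])
  qed
  show "((\<lambda>u. (hess_xx f (x0 + (u - t0) *\<^sub>R v) u *v v + grad_xt f (x0 + (u - t0) *\<^sub>R v) u) $ i) has_real_derivative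
     G2 ?p u v $ i) (at u within {t0..})"
    using D unfolding eq by (simp add: hess_xx_def grad_xt_def matrix_vector_mult_def)
qed

end


context
  fixes f :: "real^'n \<Rightarrow> real \<Rightarrow> real" and m :: real
  assumes m_pos: "m > 0"
    and strong_convex: "\<forall>x t. 0 \<le> t \<longrightarrow> psd (hess_xx f x t - m *\<^sub>R mat 1)"
begin

lemma coerc: "0 \<le> t \<Longrightarrow> m * (v \<bullet> v) \<le> v \<bullet> (hess_xx f x t *v v)"
proof -
  assume t: "0 \<le> t"
  have "0 \<le> v \<bullet> ((hess_xx f x t - m *\<^sub>R mat 1) *v v)"
    using strong_convex t unfolding psd_def by blast
  moreover have "(hess_xx f x t - m *\<^sub>R mat 1) *v v = hess_xx f x t *v v - m *\<^sub>R v"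
    by (simp add: matrix_vector_mult_diff_rdistrib scaleR_matrix_vector_assoc[symmetric])
  ultimately show ?thesis by (simp add: inner_diff_right)
qed

lemma hess_invertible: "0 \<le> t \<Longrightarrow> invertible (hess_xx f x t)"
proof -
  assume t: "0 \<le> t"
  have "inj ((*v) (hess_xx f x t))"
  proof (rule injI)
    fix a b assume "hess_xx f x t *v a = hess_xx f x t *v b"
    then have "hess_xx f x t *v (a - b) = 0" by (simp add: matrix_vector_mult_diff_distrib)
    then have "m * ((a - b) \<bullet> (a - b)) \<le> 0" using coerc[OF t, of "a - b" x] by simp
    then have "(a - b) \<bullet> (a - b) \<le> 0" using m_pos by (simp add: mult_le_0_iff)
    then show "a = b" by (metis eq_iff_diff_eq_0 inner_eq_zero_iff inner_ge_zero order.antisym)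
  qed
  then show ?thesis
    using matrix_left_invertible_injective invertible_left_inverse by blast
qed

lemma hess_inv_right: "0 \<le> t \<Longrightarrow> hess_xx f x t *v (matrix_inv (hess_xx f x t) *v w) = w"
proof -
  assume t: "0 \<le> t"
  let ?H = "hess_xx f x t"
  have "\<exists>A'. ?H ** A' = mat 1 \<and> A' ** ?H = mat 1" using hess_invertible[OF t] unfolding invertible_def .
  then have "?H ** matrix_inv ?H = mat 1 \<and> matrix_inv ?H ** ?H = mat 1"
    unfolding matrix_inv_def by (rule someI_ex)
  then show ?thesis by (simp add: matrix_vector_mul_assoc)
qed

lemma hess_inv_norm: "0 \<le> t \<Longrightarrow> norm (matrix_inv (hess_xx f x t) *v w) \<le> norm w / m"
proof -
  assume t: "0 \<le> t"
  define y where "y = matrix_inv (hess_xx f x t) *v w"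
  have Hy: "hess_xx f x t *v y = w" unfolding y_def by (rule hess_inv_right[OF t])
  have "m * (norm y)^2 \<le> y \<bullet> w" using coerc[OF t, of y x] Hy by (simp add: power2_norm_eq_inner)
  also have "\<dots> \<le> norm y * norm w" by (rule norm_cauchy_schwarz)
  finally have "m * (norm y)^2 \<le> norm y * norm w" .
  then have "m * norm y \<le> norm w"
    by (cases "norm y = 0") (auto simp: power2_eq_square mult.assoc[symmetric])
  then show ?thesis unfolding y_def[symmetric] using m_pos by (simp add: field_simps)
qed

lemma mv_neg: "(A::real^'n^'n) *v (- y) = - (A *v y)"
  using matrix_vector_mult_diff_distrib[of A 0 y] by simp

lemma xdot_eq: "0 \<le> t \<Longrightarrow> hess_xx f x t *v xdot f \<alpha> x t + grad_xt f x t = - (\<alpha> *\<^sub>R grad_x f x t)"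
  unfolding xdot_def mv_neg by (simp add: hess_inv_right)

lemma xdot_norm: "0 \<le> t \<Longrightarrow> norm (xdot f \<alpha> x t) \<le> (\<bar>\<alpha>\<bar> * norm (grad_x f x t) + norm (grad_xt f x t)) / m"
proof -
  assume t: "0 \<le> t"
  have "norm (xdot f \<alpha> x t) \<le> norm (\<alpha> *\<^sub>R grad_x f x t + grad_xt f x t) / m"
    unfolding xdot_def norm_minus_cancel by (rule hess_inv_norm[OF t])
  also have "\<dots> \<le> (\<bar>\<alpha>\<bar> * norm (grad_x f x t) + norm (grad_xt f x t)) / m"
    using m_pos by (intro divide_right_mono) (auto intro: order_trans[OF norm_triangle_ineq])
  finally show ?thesis .
qed

end


lemma vbound:
  fixes F :: "real \<Rightarrow> 'b::real_normed_vector"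
  assumes ab: "a \<le> b"
    and d: "\<And>x. x \<in> {a..b} \<Longrightarrow> (F has_vector_derivative F' x) (at x within {a..b})"
    and B: "\<And>x. x \<in> {a..b} \<Longrightarrow> norm (F' x) \<le> B"
  shows "norm (F b - F a) \<le> B * (b - a)"
proof -
  have "norm (F b - F a) \<le> B * norm (b - a)"
  proof (rule differentiable_bound[of "{a..b}" F "\<lambda>x h. h *\<^sub>R F' x" B])
    show "convex {a..b}" by simp
    show "(F has_derivative (\<lambda>h. h *\<^sub>R F' x)) (at x within {a..b})" if "x \<in> {a..b}" for x
      using d[OF that] unfolding has_vector_derivative_def .
    show "onorm (\<lambda>h. h *\<^sub>R F' x) \<le> B" if "x \<in> {a..b}" for x
      using onorm_scaleR_left[OF bounded_linear_ident, of "F' x"] B[OF that] by (simp add: onorm_id)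
  qed (use ab in auto)
  then show ?thesis using ab by simp
qed

lemma mv_norm: "norm (A *v v) \<le> spec_norm A * norm v"
  unfolding spec_norm_def by (rule onorm[OF matrix_vector_mul_bounded_linear])

lemma poly_mono:
  fixes c0 c1 c2 c3 :: real
  assumes "0 \<le> c2" "0 \<le> c3" "0 < c1" "0 \<le> x" "x < y"
  shows "c3*x^3 + c2*x^2 + c1*x - c0 < c3*y^3 + c2*y^2 + c1*y - c0"
proof -
  have "x^3 \<le> y^3" "x^2 \<le> y^2" using assms by (auto intro: power_mono)
  then have "c3*x^3 \<le> c3*y^3" "c2*x^2 \<le> c2*y^2" using assms by (auto intro: mult_left_mono)
  moreover have "c1*x < c1*y" using assms by simp
  ultimately show ?thesis by linarith
qed

lemma poly_root:
  fixes c0 c1 c2 c3 tk :: real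
  assumes c: "0 \<le> c2" "0 \<le> c3" "0 < c1" "0 < c0"
    and \<Phi>: "\<And>t. \<Phi> t = c3*(t - tk)^3 + c2*(t - tk)^2 + c1*(t - tk) - c0"
  shows "tk < Inf {t. tk < t \<and> \<Phi> t = 0} \<and> \<Phi> (Inf {t. tk < t \<and> \<Phi> t = 0}) = 0"
proof -
  define T where "T = c0 / c1 + 1"
  have "0 < c0 / c1" using c by simp
  then have T0: "0 < T" unfolding T_def by linarith
  have "c1 * T > c0" using c unfolding T_def by (simp add: field_simps)
  moreover have "0 \<le> c3 * T^3 + c2 * T^2" using c T0 by simp
  ultimately have PT: "0 \<le> \<Phi> (tk + T)" unfolding \<Phi> by simp
  have P0: "\<Phi> tk \<le> 0" unfolding \<Phi> using c by simp
  have cont: "continuous_on {tk..tk+T} \<Phi>" unfolding \<Phi> by (intro continuous_intros)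
  obtain t1 where t1: "tk \<le> t1" "t1 \<le> tk + T" "\<Phi> t1 = 0"
    using IVT'[of \<Phi> tk 0 "tk + T", OF P0 PT _ cont] T0 by auto
  have "t1 \<noteq> tk"
  proof
    assume "t1 = tk"
    then have "\<Phi> t1 = - c0" unfolding \<Phi> by simp
    then show False using t1(3) c by simp
  qed
  with t1 have t1g: "tk < t1" by simp
  have mono: "\<Phi> x < \<Phi> y" if "tk \<le> x" "x < y" for x y
    unfolding \<Phi> using poly_mono[OF c(1,2,3), of "x - tk" "y - tk" c0] that by simp
  have "{t. tk < t \<and> \<Phi> t = 0} = {t1}"
  proof safe
    fix t assume t: "tk < t" "\<Phi> t = 0"
    show "t = t1"
    proof (rule ccontr)
      assume "t \<noteq> t1"
      then consider "t < t1" | "t1 < t" by linarith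
      then show False
        by cases (use mono[of t t1] mono[of t1 t] t t1 t1g in auto)
    qed
  qed (use t1g t1 in auto)
  then show ?thesis using t1g t1 by simp
qed


context
  fixes f :: "real^'n \<Rightarrow> real \<Rightarrow> real" and m Cxx Cxt Cxxt Cxtt Cxxx \<alpha> :: real
  assumes smooth: "C3_time f"
    and m_pos: "m > 0"
    and strong_convex: "\<forall>x t. 0 \<le> t \<longrightarrow> psd (hess_xx f x t - m *\<^sub>R mat 1)"
    and consts_pos: "Cxx > 0" "Cxt > 0" "Cxxt > 0" "Cxtt > 0" "Cxxx > 0"
    and bnd_xx: "\<forall>x t. 0 \<le> t \<longrightarrow> spec_norm (hess_xx f x t) \<le> Cxx"
    and bnd_xt: "\<forall>x t. 0 \<le> t \<longrightarrow> norm (grad_xt f x t) \<le> Cxt"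
    and bnd_xxt: "\<forall>x t. 0 \<le> t \<longrightarrow> spec_norm (hess_xxt f x t) \<le> Cxxt"
    and bnd_xtt: "\<forall>x t. 0 \<le> t \<longrightarrow> norm (grad_xtt f x t) \<le> Cxtt"
    and bnd_xxx: "\<forall>x t i. 0 \<le> t \<longrightarrow> spec_norm (hess_xxx f i x t) \<le> Cxxx"
    and alpha_pos: "\<alpha> > 0"
begin

lemma G1_norm:
  assumes u: "0 \<le> u"
  shows "norm (hess_xx f y u *v v + grad_xt f y u) \<le> Cxx * norm v + Cxt"
proof -
  have "norm (hess_xx f y u *v v) \<le> spec_norm (hess_xx f y u) * norm v" by (rule mv_norm)
  also have "\<dots> \<le> Cxx * norm v" using bnd_xx u by (intro mult_right_mono) auto
  finally have 1: "norm (hess_xx f y u *v v) \<le> Cxx * norm v" .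
  have 2: "norm (grad_xt f y u) \<le> Cxt" using bnd_xt u by auto
  show ?thesis using 1 2 norm_triangle_ineq[of "hess_xx f y u *v v" "grad_xt f y u"] by linarith
qed

lemma G2_norm:
  assumes u: "0 \<le> u"
  shows "norm (G2 f y u v) \<le> (Cxxx * norm1 v + 2 * Cxxt) * norm v + Cxtt"
proof -
  have "norm (\<Sum>k\<in>UNIV. v$k *\<^sub>R (hess_xxx f k y u *v v)) \<le> (\<Sum>k\<in>UNIV. norm (v$k *\<^sub>R (hess_xxx f k y u *v v)))"
    by (rule norm_sum)
  also have "\<dots> \<le> (\<Sum>k\<in>UNIV. \<bar>v$k\<bar> * (Cxxx * norm v))"
  proof (rule sum_mono)
    fix k
    have "norm (hess_xxx f k y u *v v) \<le> spec_norm (hess_xxx f k y u) * norm v" by (rule mv_norm)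
    also have "\<dots> \<le> Cxxx * norm v" using bnd_xxx u by (intro mult_right_mono) auto
    finally show "norm (v$k *\<^sub>R (hess_xxx f k y u *v v)) \<le> \<bar>v$k\<bar> * (Cxxx * norm v)"
      by (simp add: mult_left_mono)
  qed
  also have "\<dots> = Cxxx * norm1 v * norm v" unfolding norm1_def by (simp add: sum_distrib_right sum_distrib_left mult_ac)
  finally have 1: "norm (\<Sum>k\<in>UNIV. v$k *\<^sub>R (hess_xxx f k y u *v v)) \<le> Cxxx * norm1 v * norm v" .
  have "norm (hess_xxt f y u *v v) \<le> spec_norm (hess_xxt f y u) * norm v" by (rule mv_norm)
  also have "\<dots> \<le> Cxxt * norm v" using bnd_xxt u by (intro mult_right_mono) auto
  finally have 2: "norm (2 *\<^sub>R (hess_xxt f y u *v v)) \<le> 2 * (Cxxt * norm v)" by simp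
  have 3: "norm (grad_xtt f y u) \<le> Cxtt" using bnd_xtt u by auto
  have eqG2: "G2 f y u v = (\<Sum>k\<in>UNIV. v$k *\<^sub>R (hess_xxx f k y u *v v)) + 2 *\<^sub>R (hess_xxt f y u *v v) + grad_xtt f y u"
    by (rule G2_def, (rule smooth)?)
  have "norm (G2 f y u v) \<le> norm (\<Sum>k\<in>UNIV. v$k *\<^sub>R (hess_xxx f k y u *v v)) + norm (2 *\<^sub>R (hess_xxt f y u *v v)) + norm (grad_xtt f y u)"
    unfolding eqG2
    using norm_triangle_ineq[of "(\<Sum>k\<in>UNIV. v$k *\<^sub>R (hess_xxx f k y u *v v)) + 2 *\<^sub>R (hess_xxt f y u *v v)" "grad_xtt f y u"]
      norm_triangle_ineq[of "(\<Sum>k\<in>UNIV. v$k *\<^sub>R (hess_xxx f k y u *v v))" "2 *\<^sub>R (hess_xxt f y u *v v)"]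
    by linarith
  then show ?thesis using 1 2 3 by (simp add: algebra_simps)
qed

lemma step_est:
  fixes xk :: "real^'n" and tk s :: real
  assumes tk: "0 \<le> tk" and s: "0 < s"
  shows "Vtraj f \<alpha> xk tk (tk + s) \<le> (abs (1 - \<alpha> * s) * norm (grad_x f xk tk)
             + ((Cxxx * norm1 (xdot f \<alpha> xk tk) + 2 * Cxxt) * norm (xdot f \<alpha> xk tk) + Cxtt) * s^2)^2 / 2"
    and "Vtraj f \<alpha> xk tk (tk + s) \<le> (norm (grad_x f xk tk))^2/2 - \<alpha> * (norm (grad_x f xk tk))^2 * s
           + (norm (grad_x f xk tk) * ((Cxxx * norm1 (xdot f \<alpha> xk tk) + 2 * Cxxt) * norm (xdot f \<alpha> xk tk) + Cxtt)
              + (Cxx * norm (xdot f \<alpha> xk tk) + Cxt)^2) * s^2"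
proof -
  define xd where "xd = xdot f \<alpha> xk tk"
  define X where "X = norm (grad_x f xk tk)"
  define a where "a = Cxx * norm xd + Cxt"
  define b where "b = (Cxxx * norm1 xd + 2 * Cxxt) * norm xd + Cxtt"
  define p where "p = (\<lambda>u. xk + (u - tk) *\<^sub>R xd)"
  define G where "G = (\<lambda>u. grad_x f (p u) u)"
  define G1 where "G1 = (\<lambda>u. hess_xx f (p u) u *v xd + grad_xt f (p u) u)"
  have b0: "0 \<le> b" unfolding b_def using consts_pos
    by (intro add_nonneg_nonneg mult_nonneg_nonneg) (auto simp: norm1_def sum_nonneg)
  have a0: "0 \<le> a" unfolding a_def using consts_pos by simp
  have X0: "0 \<le> X" unfolding X_def by simp
  have V: "Vtraj f \<alpha> xk tk u = 1/2 * (norm (G u))^2" for u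
    unfolding Vtraj_def Vf_def traj_def G_def p_def xd_def by simp
  have Gtk: "G tk = grad_x f xk tk" by (simp add: G_def p_def)
  have G1tk: "G1 tk = - (\<alpha> *\<^sub>R grad_x f xk tk)"
    unfolding G1_def p_def xd_def using xdot_eq[OF m_pos strong_convex tk] by simp
  have dG: "(G has_vector_derivative G1 u) (at u within {tk..})" if "tk \<le> u" for u
    unfolding G_def G1_def p_def by (rule G_deriv[OF smooth tk that])
  have dG1: "(G1 has_vector_derivative G2 f (p u) u xd) (at u within {tk..})" if "tk \<le> u" for u
    unfolding G1_def p_def by (rule G1_deriv[OF smooth tk that])
  have nG1: "norm (G1 u) \<le> a" if "tk \<le> u" for u
    unfolding G1_def a_def by (rule G1_norm) (use tk that in linarith)
  have nG2: "norm (G2 f (p u) u xd) \<le> b" if "tk \<le> u" for u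
    unfolding b_def by (rule G2_norm) (use tk that in linarith)
  have A: "norm (G1 u - G1 tk) \<le> b * (u - tk)" if "tk \<le> u" for u
  proof (rule vbound[OF that])
    fix x assume x: "x \<in> {tk..u}"
    show "(G1 has_vector_derivative G2 f (p x) x xd) (at x within {tk..u})"
      by (rule has_vector_derivative_within_subset[OF dG1]) (use x in auto)
    show "norm (G2 f (p x) x xd) \<le> b" using nG2 x by auto
  qed
  have L: "norm (G (tk + s) - G tk - ((tk + s) - tk) *\<^sub>R G1 tk) \<le> norm ((tk + s) - tk) * (b * s)"
  proof (rule vector_differentiable_bound_linearization[where S="{tk..tk+s}"])
    fix x assume x: "x \<in> {tk..tk+s}"
    show "(G has_vector_derivative G1 x) (at x within {tk..tk+s})"
      by (rule has_vector_derivative_within_subset[OF dG]) (use x in auto)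
    have "norm (G1 x - G1 tk) \<le> b * (x - tk)" using A x by auto
    also have "\<dots> \<le> b * s" using x b0 by (intro mult_left_mono) auto
    finally show "norm (G1 x - G1 tk) \<le> b * s" .
  qed (use s closed_segment_eq_real_ivl in auto)
  have "G (tk + s) = (1 - \<alpha> * s) *\<^sub>R grad_x f xk tk + (G (tk + s) - G tk - ((tk + s) - tk) *\<^sub>R G1 tk)"
    unfolding Gtk G1tk by (simp add: algebra_simps)
  then have "norm (G (tk + s)) \<le> norm ((1 - \<alpha> * s) *\<^sub>R grad_x f xk tk) + norm (G (tk + s) - G tk - ((tk + s) - tk) *\<^sub>R G1 tk)"
    by (metis norm_triangle_ineq)
  also have "\<dots> \<le> abs (1 - \<alpha> * s) * X + b * s^2"
    using L s unfolding X_def by (simp add: power2_eq_square mult_ac)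
  finally have nGs: "norm (G (tk + s)) \<le> abs (1 - \<alpha> * s) * X + b * s^2" .
  have "(norm (G (tk + s)))^2 \<le> (abs (1 - \<alpha> * s) * X + b * s^2)^2"
    by (rule power_mono[OF nGs]) simp
  then show "Vtraj f \<alpha> xk tk (tk + s) \<le> (abs (1 - \<alpha> * s) * norm (grad_x f xk tk)
             + ((Cxxx * norm1 (xdot f \<alpha> xk tk) + 2 * Cxxt) * norm (xdot f \<alpha> xk tk) + Cxtt) * s^2)^2 / 2"
    unfolding V X_def[symmetric] b_def[symmetric] xd_def[symmetric] by simp
  have nGd: "norm (G u - G tk) \<le> a * (u - tk)" if "tk \<le> u" for u
  proof (rule vbound[OF that])
    fix x assume x: "x \<in> {tk..u}"
    show "(G has_vector_derivative G1 x) (at x within {tk..u})"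
      by (rule has_vector_derivative_within_subset[OF dG]) (use x in auto)
    show "norm (G1 x) \<le> a" using nG1 x by auto
  qed
  define K where "K = X * b + a^2"
  have K0: "0 \<le> K" unfolding K_def using X0 b0 by simp
  define Z where "Z = (\<lambda>u. 1/2 * (G u \<bullet> G u) + (\<alpha> * X^2) * (u - tk) - K * ((u - tk) * (u - tk)))"
  define Z' where "Z' = (\<lambda>u. 1/2 * (G u \<bullet> G1 u + G1 u \<bullet> G u) + (\<alpha> * X^2) * 1 - K * ((u - tk) * 1 + 1 * (u - tk)))"
  have dZ: "(Z has_real_derivative Z' u) (at u within {tk..})" if "tk \<le> u" for u
  proof -
    have "((\<lambda>u. G u \<bullet> G u) has_vector_derivative (G u \<bullet> G1 u + G1 u \<bullet> G u)) (at u within {tk..})"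
      by (rule bounded_bilinear.has_vector_derivative[OF bounded_bilinear_inner dG[OF that] dG[OF that]])
    then have i: "((\<lambda>u. G u \<bullet> G u) has_real_derivative (G u \<bullet> G1 u + G1 u \<bullet> G u)) (at u within {tk..})"
      by (simp add: has_real_derivative_iff_has_vector_derivative)
    have l: "((\<lambda>u. u - tk) has_real_derivative 1) (at u within {tk..})"
      by (rule DERIV_cong[OF DERIV_diff[OF DERIV_ident DERIV_const]]) simp
    show ?thesis unfolding Z_def Z'_def
      by (intro DERIV_diff DERIV_add DERIV_cmult i l DERIV_mult')
  qed
  have Z'neg: "Z' u \<le> 0" if u: "tk \<le> u" for u
  proof -
    have e: "G u \<bullet> G1 u = G tk \<bullet> G1 tk + G tk \<bullet> (G1 u - G1 tk) + (G u - G tk) \<bullet> G1 u"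
      by (simp add: algebra_simps)
    have e1: "G tk \<bullet> G1 tk = - (\<alpha> * X^2)"
      unfolding Gtk G1tk X_def by (simp add: power2_norm_eq_inner)
    have e2: "G tk \<bullet> (G1 u - G1 tk) \<le> X * (b * (u - tk))"
    proof -
      have "G tk \<bullet> (G1 u - G1 tk) \<le> norm (G tk) * norm (G1 u - G1 tk)" by (rule norm_cauchy_schwarz)
      also have "\<dots> \<le> X * (b * (u - tk))" unfolding Gtk X_def[symmetric]
        using A[OF u] X0 by (rule mult_left_mono)
      finally show ?thesis .
    qed
    have e3: "(G u - G tk) \<bullet> G1 u \<le> (a * (u - tk)) * a"
    proof -
      have "(G u - G tk) \<bullet> G1 u \<le> norm (G u - G tk) * norm (G1 u)" by (rule norm_cauchy_schwarz)
      also have "\<dots> \<le> (a * (u - tk)) * a"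
        using nGd[OF u] nG1[OF u] a0 u by (intro mult_mono) auto
      finally show ?thesis .
    qed
    have "G u \<bullet> G1 u \<le> - (\<alpha> * X^2) + K * (u - tk)"
      using e e1 e2 e3 unfolding K_def by (simp add: algebra_simps power2_eq_square)
    moreover have "G1 u \<bullet> G u = G u \<bullet> G1 u" by (rule inner_commute)
    moreover have "0 \<le> K * (u - tk)" using K0 u by simp
    ultimately show ?thesis unfolding Z'_def by (simp add: algebra_simps)
  qed
  have ts: "tk < tk + s" using s by simp
  obtain z where z: "tk < z" "z < tk + s" "Z (tk + s) - Z tk = (tk + s - tk) * Z' z"
    using mvt_within[OF ts, of Z Z'] dZ by auto
  have "s * Z' z \<le> 0" using s Z'neg[of z] z by (intro mult_nonneg_nonpos) auto
  then have "Z (tk + s) \<le> Z tk" using z by simp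
  moreover have "Z tk = X^2/2" unfolding Z_def Gtk X_def by (simp add: power2_norm_eq_inner)
  moreover have "Z (tk + s) = Vtraj f \<alpha> xk tk (tk + s) + \<alpha> * X^2 * s - K * s^2"
    unfolding Z_def V by (simp add: power2_norm_eq_inner[symmetric] power2_eq_square)
  ultimately show "Vtraj f \<alpha> xk tk (tk + s) \<le> (norm (grad_x f xk tk))^2/2 - \<alpha> * (norm (grad_x f xk tk))^2 * s
           + (norm (grad_x f xk tk) * ((Cxxx * norm1 (xdot f \<alpha> xk tk) + 2 * Cxxt) * norm (xdot f \<alpha> xk tk) + Cxtt)
              + (Cxx * norm (xdot f \<alpha> xk tk) + Cxt)^2) * s^2"
    unfolding X_def[symmetric] xd_def[symmetric] a_def[symmetric] b_def[symmetric] K_def[symmetric]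
    by linarith
qed

end


lemma cubic_alg:
  fixes X b \<alpha> s :: real
  assumes X: "0 \<le> X" and b: "0 \<le> b" and al: "0 < \<alpha>" and s: "0 < s"
    and ph: "1/2 * b^2 * s^3 + 3/2 * \<alpha> * X * b * s^2 + (X * b + 2 * \<alpha>^2 * (X^2/2)) * s - 2 * \<alpha> * (X^2/2) = 0"
  shows "(abs (1 - \<alpha> * s) * X + b * s^2)^2 / 2 \<le> X^2/2 - \<alpha>^2 * (X^2/2) * s^2"
proof -
  have ab: "abs (1 - \<alpha> * s) \<le> 1 + \<alpha> * s" using al s by (simp add: abs_le_iff)
  have "(abs (1 - \<alpha> * s) * X + b * s^2)^2 = (1 - \<alpha> * s)^2 * X^2 + 2 * abs (1 - \<alpha> * s) * (X * b * s^2) + b^2 * s^4"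
    by (simp add: power2_eq_square algebra_simps power4_eq_xxxx)
  also have "\<dots> \<le> (1 - \<alpha> * s)^2 * X^2 + 2 * (1 + \<alpha> * s) * (X * b * s^2) + b^2 * s^4"
    using ab X b s by (intro add_mono mult_right_mono mult_left_mono order_refl) auto
  finally have 1: "(abs (1 - \<alpha> * s) * X + b * s^2)^2 \<le> (1 - \<alpha> * s)^2 * X^2 + 2 * (1 + \<alpha> * s) * (X * b * s^2) + b^2 * s^4" .
  have 2: "(1 - \<alpha> * s)^2 * X^2 + 2 * (1 + \<alpha> * s) * (X * b * s^2) + b^2 * s^4
      = X^2 - 2 * \<alpha>^2 * (X^2/2) * s^2
        + 2 * s * (1/2 * b^2 * s^3 + 3/2 * \<alpha> * X * b * s^2 + (X * b + 2 * \<alpha>^2 * (X^2/2)) * s - 2 * \<alpha> * (X^2/2))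
        - \<alpha> * X * b * s^3"
    by (simp add: power2_eq_square power3_eq_cube power4_eq_xxxx algebra_simps)
  have 3: "0 \<le> \<alpha> * X * b * s^3" using al X b s by simp
  show ?thesis using 1 2 3 ph by simp
qed

lemma quad_alg:
  fixes X a b \<alpha> s V :: real
  assumes a: "0 \<le> a" and b: "0 \<le> b" and s: "0 < s"
    and ph: "1/2 * a * b * s^2 + (a^2 + b * X) * s - 2 * \<alpha> * (X^2/2) = 0"
    and V: "V \<le> X^2/2 - \<alpha> * X^2 * s + (X * b + a^2) * s^2"
  shows "V \<le> X^2/2 - 1/2 * a * b * s^3"
proof -
  have "(X * b + a^2) * s^2 = s * ((a^2 + b * X) * s)" by (simp add: power2_eq_square algebra_simps)
  also have "(a^2 + b * X) * s = \<alpha> * X^2 - 1/2 * a * b * s^2" using ph by simp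
  finally have "(X * b + a^2) * s^2 = \<alpha> * X^2 * s - 1/2 * a * b * s^3"
    by (simp add: power2_eq_square power3_eq_cube algebra_simps)
  then show ?thesis using V by simp
qed

lemma s_lower:
  fixes s c0 c1 c2 c3 d1 d2 d3 l :: real
  assumes s: "0 < s" and c: "0 \<le> c3" "c3 \<le> d3" "0 \<le> c2" "c2 \<le> d2" "0 \<le> c1" "c1 \<le> d1"
    and eq: "c3 * s^3 + c2 * s^2 + c1 * s = c0" and l: "l \<le> c0" "0 < l" and D: "0 < d3 + d2 + d1"
  shows "min 1 (l / (d3 + d2 + d1)) \<le> s"
proof (cases "1 \<le> s")
  case True then show ?thesis by simp
next
  case False
  then have s1: "s < 1" by simp
  have s2: "s^2 \<le> s"
  proof -
    have "s * s \<le> 1 * s" using s s1 by (intro mult_right_mono) auto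
    then show ?thesis by (simp add: power2_eq_square)
  qed
  have "s * s^2 \<le> 1 * s^2" using s s1 by (intro mult_right_mono) auto
  then have "s^3 \<le> s^2" by (simp add: power3_eq_cube power2_eq_square)
  with s2 have "s^3 \<le> s" "s^2 \<le> s" by auto
  then have "c3 * s^3 \<le> d3 * s" "c2 * s^2 \<le> d2 * s" "c1 * s \<le> d1 * s"
    using c s by (auto intro: mult_mono mult_right_mono)
  then have "l \<le> (d3 + d2 + d1) * s" using eq l by (simp add: algebra_simps)
  then have "l / (d3 + d2 + d1) \<le> s" using D by (simp add: divide_le_eq mult.commute)
  then show ?thesis by simp
qed


definition cdec :: "bool \<Rightarrow> real \<Rightarrow> real \<Rightarrow> real \<Rightarrow> real \<Rightarrow> real \<Rightarrow> real \<Rightarrow> real \<Rightarrow> real \<Rightarrow> real \<Rightarrow> real \<Rightarrow> real" where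
  "cdec cubic m Cxx Cxt Cxxt Cxtt Cxxx \<alpha> N L M =
    (let Y = (\<alpha> * sqrt (2*M) + Cxt) / m;
         Am = Cxx * Y + Cxt;
         Bm = (Cxxx * (N * Y) + 2 * Cxxt) * Y + Cxtt;
         Kq = 0 + 1/2 * Am * Bm + (Am^2 + Bm * sqrt (2*M));
         Kc = 1/2 * Bm^2 + 3/2 * \<alpha> * sqrt (2*M) * Bm + (sqrt (2*M) * Bm + 2 * \<alpha>^2 * M)
     in if cubic then \<alpha>^2 * L * (min 1 (2 * \<alpha> * L / Kc))^2
        else 1/2 * Cxt * Cxtt * (min 1 (2 * \<alpha> * L / Kq))^3)"

lemma norm1_le: "norm1 (v::real^'n) \<le> real CARD('n) * norm v"
proof -
  have "norm1 v \<le> (\<Sum>i\<in>(UNIV::'n set). norm v)" unfolding norm1_def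
    by (rule sum_mono) (rule component_le_norm_cart)
  then show ?thesis by simp
qed

lemma norm1_nonneg: "0 \<le> norm1 v"
  unfolding norm1_def by (simp add: sum_nonneg)

context
  fixes f :: "real^'n \<Rightarrow> real \<Rightarrow> real" and m Cxx Cxt Cxxt Cxtt Cxxx \<alpha> :: real
  assumes smooth: "C3_time f"
    and m_pos: "m > 0"
    and strong_convex: "\<forall>x t. 0 \<le> t \<longrightarrow> psd (hess_xx f x t - m *\<^sub>R mat 1)"
    and consts_pos: "Cxx > 0" "Cxt > 0" "Cxxt > 0" "Cxtt > 0" "Cxxx > 0"
    and bnd_xx: "\<forall>x t. 0 \<le> t \<longrightarrow> spec_norm (hess_xx f x t) \<le> Cxx"
    and bnd_xt: "\<forall>x t. 0 \<le> t \<longrightarrow> norm (grad_xt f x t) \<le> Cxt"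
    and bnd_xxt: "\<forall>x t. 0 \<le> t \<longrightarrow> spec_norm (hess_xxt f x t) \<le> Cxxt"
    and bnd_xtt: "\<forall>x t. 0 \<le> t \<longrightarrow> norm (grad_xtt f x t) \<le> Cxtt"
    and bnd_xxx: "\<forall>x t i. 0 \<le> t \<longrightarrow> spec_norm (hess_xxx f i x t) \<le> Cxxx"
    and alpha_pos: "\<alpha> > 0"
begin

lemmas est = step_est[OF smooth m_pos strong_convex consts_pos bnd_xx bnd_xt bnd_xxt bnd_xtt bnd_xxx alpha_pos]

lemma step_main:
  fixes xk :: "real^'n" and tk :: real and cubic :: bool
  assumes tk: "0 \<le> tk" and Vp: "0 < Vtraj f \<alpha> xk tk tk"
  defines "T \<equiv> Inf {t. tk < t \<and> phi cubic Cxx Cxt Cxxx Cxxt Cxtt \<alpha> f xk tk t = 0}"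
  shows "tk < T \<and> Vtraj f \<alpha> xk tk T < Vtraj f \<alpha> xk tk tk \<and>
    (\<forall>L M. 0 < L \<longrightarrow> L \<le> Vtraj f \<alpha> xk tk tk \<longrightarrow> Vtraj f \<alpha> xk tk tk \<le> M \<longrightarrow>
      Vtraj f \<alpha> xk tk T \<le> Vtraj f \<alpha> xk tk tk - cdec cubic m Cxx Cxt Cxxt Cxtt Cxxx \<alpha> (real CARD('n)) L M)"
proof -
  define xd where "xd = xdot f \<alpha> xk tk"
  define X where "X = norm (grad_x f xk tk)"
  define a where "a = Cxx * norm xd + Cxt"
  define b where "b = (Cxxx * norm1 xd + 2 * Cxxt) * norm xd + Cxtt"
  define V0 where "V0 = Vtraj f \<alpha> xk tk tk"
  have V0X: "V0 = X^2/2" unfolding V0_def X_def Vtraj_def Vf_def traj_def by simp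
  have X0: "0 \<le> X" unfolding X_def by simp
  have sq: "sqrt (2 * V0) = X" unfolding V0X using X0 by simp
  have V0p: "0 < V0" using Vp unfolding V0_def .
  have Xp: "0 < X" using V0p X0 unfolding V0X by (cases "X = 0") auto
  have a_ge: "Cxt \<le> a" unfolding a_def using consts_pos by simp
  have "0 \<le> (Cxxx * norm1 xd + 2 * Cxxt) * norm xd"
    using consts_pos norm1_nonneg[of xd] by (intro mult_nonneg_nonneg add_nonneg_nonneg) auto
  then have b_ge: "Cxtt \<le> b" unfolding b_def by linarith
  have a0: "0 < a" using a_ge consts_pos by linarith
  have b0: "0 < b" using b_ge consts_pos by linarith
  define c3 where "c3 = (if cubic then 1/2 * b^2 else 0)"
  define c2 where "c2 = (if cubic then 3/2 * \<alpha> * X * b else 1/2 * a * b)"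
  define c1 where "c1 = (if cubic then X * b + 2 * \<alpha>^2 * V0 else a^2 + b * X)"
  define c0 where "c0 = 2 * \<alpha> * V0"
  have phi_eq: "phi cubic Cxx Cxt Cxxx Cxxt Cxtt \<alpha> f xk tk t = c3*(t - tk)^3 + c2*(t - tk)^2 + c1*(t - tk) - c0" for t
    unfolding phi_def Let_def xd_def[symmetric] V0_def[symmetric]
    unfolding a_def[symmetric] b_def[symmetric] sq c3_def c2_def c1_def c0_def
    by (cases cubic) simp_all
  have h1: "0 < X * b" "0 < b * X" "0 < 2 * \<alpha>^2 * V0" "0 < a^2" using a0 b0 Xp V0p alpha_pos by auto
  have p1: "0 < X * b + 2 * \<alpha>^2 * V0" "0 < a^2 + b * X" using h1 by linarith+
  have c: "0 \<le> c2" "0 \<le> c3" "0 < c1" "0 < c0"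
    unfolding c3_def c2_def c1_def c0_def using a0 b0 Xp V0p alpha_pos p1 by auto
  have R: "tk < T \<and> phi cubic Cxx Cxt Cxxx Cxxt Cxtt \<alpha> f xk tk T = 0"
    unfolding T_def by (rule poly_root[OF c phi_eq])
  define s where "s = T - tk"
  have s0: "0 < s" using R unfolding s_def by simp
  have Ts: "T = tk + s" unfolding s_def by simp
  have ph: "c3 * s^3 + c2 * s^2 + c1 * s = c0" using R phi_eq[of T] unfolding Ts by simp
  have dec: "Vtraj f \<alpha> xk tk T \<le> V0 - (if cubic then \<alpha>^2 * V0 * s^2 else 1/2 * a * b * s^3)"
  proof (cases cubic)
    case True
    have "Vtraj f \<alpha> xk tk T \<le> (abs (1 - \<alpha> * s) * X + b * s^2)^2 / 2"
      unfolding Ts X_def b_def xd_def by (rule est(1)[OF tk s0])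
    also have "\<dots> \<le> X^2/2 - \<alpha>^2 * (X^2/2) * s^2"
      by (rule cubic_alg) (use X0 b0 alpha_pos s0 ph True in \<open>auto simp: c3_def c2_def c1_def c0_def V0X\<close>)
    finally show ?thesis using True unfolding V0X by simp
  next
    case False
    have "Vtraj f \<alpha> xk tk T \<le> X^2/2 - 1/2 * a * b * s^3"
    proof (rule quad_alg)
      show "0 \<le> a" "0 \<le> b" "0 < s" using a0 b0 s0 by auto
      show "1/2 * a * b * s^2 + (a^2 + b * X) * s - 2 * \<alpha> * (X^2/2) = 0"
        using ph False unfolding c3_def c2_def c1_def c0_def V0X by simp
      show "Vtraj f \<alpha> xk tk T \<le> X^2/2 - \<alpha> * X^2 * s + (X * b + a^2) * s^2"
        unfolding Ts X_def b_def a_def xd_def by (rule est(2)[OF tk s0])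
    qed
    then show ?thesis using False unfolding V0X by simp
  qed
  have pos: "0 < (if cubic then \<alpha>^2 * V0 * s^2 else 1/2 * a * b * s^3)"
    using alpha_pos V0p s0 a0 b0 by auto
  have lt: "Vtraj f \<alpha> xk tk T < V0" using dec pos by linarith
  have unif: "Vtraj f \<alpha> xk tk T \<le> V0 - cdec cubic m Cxx Cxt Cxxt Cxtt Cxxx \<alpha> (real CARD('n)) L M"
    if L: "0 < L" "L \<le> V0" "V0 \<le> M" for L M
  proof -
    define Y where "Y = (\<alpha> * sqrt (2*M) + Cxt) / m"
    define Am where "Am = Cxx * Y + Cxt"
    define Bm where "Bm = (Cxxx * (real CARD('n) * Y) + 2 * Cxxt) * Y + Cxtt"
    define Kq where "Kq = 0 + 1/2 * Am * Bm + (Am^2 + Bm * sqrt (2*M))"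
    define Kc where "Kc = 1/2 * Bm^2 + 3/2 * \<alpha> * sqrt (2*M) * Bm + (sqrt (2*M) * Bm + 2 * \<alpha>^2 * M)"
    have cd: "cdec cubic m Cxx Cxt Cxxt Cxtt Cxxx \<alpha> (real CARD('n)) L M =
       (if cubic then \<alpha>^2 * L * (min 1 (2 * \<alpha> * L / Kc))^2
        else 1/2 * Cxt * Cxtt * (min 1 (2 * \<alpha> * L / Kq))^3)"
      unfolding cdec_def Let_def Y_def[symmetric] Am_def[symmetric] Bm_def[symmetric] Kq_def[symmetric] Kc_def[symmetric] ..
    have XM: "X \<le> sqrt (2*M)" using L unfolding sq[symmetric] by simp
    have nxd: "norm xd \<le> Y"
    proof -
      have "norm xd \<le> (\<bar>\<alpha>\<bar> * X + norm (grad_xt f xk tk)) / m"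
        unfolding xd_def X_def by (rule xdot_norm[OF m_pos strong_convex tk])
      also have "\<dots> \<le> (\<alpha> * sqrt (2*M) + Cxt) / m"
        using XM alpha_pos bnd_xt tk m_pos
        by (intro divide_right_mono add_mono) (auto intro: mult_left_mono)
      finally show ?thesis unfolding Y_def .
    qed
    have Y0: "0 \<le> Y" using nxd norm_ge_zero order_trans by blast
    have n1: "norm1 xd \<le> real CARD('n) * Y"
      using norm1_le[of xd] nxd by (meson mult_left_mono of_nat_0_le_iff order_trans)
    have aA: "a \<le> Am" unfolding a_def Am_def using nxd consts_pos by (simp add: mult_left_mono)
    have bB: "b \<le> Bm" unfolding b_def Bm_def using nxd n1 consts_pos Y0
      by (intro add_mono mult_mono order_refl) (auto simp: norm1_nonneg intro: mult_left_mono)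
    have sM: "0 \<le> sqrt (2*M)" using L by simp
    have c0L: "2 * \<alpha> * L \<le> c0" unfolding c0_def using L alpha_pos by simp
    have aL: "0 < 2 * \<alpha> * L" using L alpha_pos by simp
    have xb: "X * b \<le> sqrt (2*M) * Bm" using XM bB X0 b0 sM by (intro mult_mono) auto
    have ab: "a * b \<le> Am * Bm" using aA bB a0 b0 by (intro mult_mono) auto
    have a2: "a^2 \<le> Am^2" using aA a0 by (intro power_mono) auto
    have b2: "b^2 \<le> Bm^2" using bB b0 by (intro power_mono) auto
    have vm: "2 * \<alpha>^2 * V0 \<le> 2 * \<alpha>^2 * M" using L alpha_pos by simp
    show ?thesis
    proof (cases cubic)
      case True
      have D: "0 < Kc" unfolding Kc_def using bB b0 sM alpha_pos L
        by (intro add_pos_nonneg) auto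
      have smin: "min 1 (2 * \<alpha> * L / Kc) \<le> s"
        unfolding Kc_def
      proof (rule s_lower[OF s0 _ _ _ _ _ _ ph c0L aL])
        show "0 \<le> c3" "0 \<le> c2" "0 \<le> c1" using c by auto
        show "c3 \<le> 1/2 * Bm^2" unfolding c3_def using True b2 by simp
        have "3/2 * \<alpha> * (X * b) \<le> 3/2 * \<alpha> * (sqrt (2*M) * Bm)" using xb alpha_pos by (intro mult_left_mono) auto
        then show "c2 \<le> 3/2 * \<alpha> * sqrt (2*M) * Bm" unfolding c2_def using True by (simp add: mult.assoc)
        show "c1 \<le> sqrt (2*M) * Bm + 2 * \<alpha>^2 * M" unfolding c1_def using True xb vm by simp
        show "0 < 1/2 * Bm^2 + 3/2 * \<alpha> * sqrt (2*M) * Bm + (sqrt (2*M) * Bm + 2 * \<alpha>^2 * M)"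
          using D unfolding Kc_def .
      qed
      have m0: "0 \<le> min 1 (2 * \<alpha> * L / Kc)" using aL D by simp
      have "\<alpha>^2 * L * (min 1 (2 * \<alpha> * L / Kc))^2 \<le> \<alpha>^2 * V0 * s^2"
        using smin m0 L alpha_pos by (intro mult_mono power_mono) auto
      then show ?thesis using dec True unfolding cd by simp
    next
      case False
      have Am0: "0 < Am" "0 < Bm" using aA a0 bB b0 by auto
      then have "0 < 1/2 * Am * Bm" "0 < Am^2" "0 \<le> Bm * sqrt (2*M)" using sM by auto
      then have D: "0 < Kq" unfolding Kq_def by linarith
      have smin: "min 1 (2 * \<alpha> * L / Kq) \<le> s"
        unfolding Kq_def
      proof (rule s_lower[OF s0 _ _ _ _ _ _ ph c0L aL])
        show "0 \<le> c3" "0 \<le> c2" "0 \<le> c1" using c by auto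
        show "c3 \<le> 0" unfolding c3_def using False by simp
        show "c2 \<le> 1/2 * Am * Bm" unfolding c2_def using False ab by simp
        show "c1 \<le> Am^2 + Bm * sqrt (2*M)" unfolding c1_def using False a2 xb by (simp add: mult.commute)
        show "0 < 0 + 1/2 * Am * Bm + (Am^2 + Bm * sqrt (2*M))" using D unfolding Kq_def .
      qed
      have m0: "0 \<le> min 1 (2 * \<alpha> * L / Kq)" using aL D by simp
      have "1/2 * Cxt * Cxtt * (min 1 (2 * \<alpha> * L / Kq))^3 \<le> 1/2 * a * b * s^3"
        using smin m0 a_ge b_ge consts_pos
        by (intro mult_mono power_mono) auto
      then show ?thesis using dec False unfolding cd by simp
    qed
  qed
  show ?thesis
  proof (intro conjI allI impI)
    show "tk < T" using R by simp
    show "Vtraj f \<alpha> xk tk T < Vtraj f \<alpha> xk tk tk" using lt unfolding V0_def .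
  next
    fix L M assume LM: "0 < L" "L \<le> Vtraj f \<alpha> xk tk tk" "Vtraj f \<alpha> xk tk tk \<le> M"
    show "Vtraj f \<alpha> xk tk T \<le> Vtraj f \<alpha> xk tk tk - cdec cubic m Cxx Cxt Cxxt Cxtt Cxxx \<alpha> (real CARD('n)) L M"
      using unif[of L M] LM unfolding V0_def by blast
  qed
qed

end


lemma cdec_pos:
  assumes "0 < m" "0 < Cxx" "0 < Cxt" "0 < Cxxt" "0 < Cxtt" "0 < Cxxx" "0 < \<alpha>" "0 \<le> N"
    "0 < L" "L \<le> M"
  shows "0 < cdec cubic m Cxx Cxt Cxxt Cxtt Cxxx \<alpha> N L M"
proof -
  define Y where "Y = (\<alpha> * sqrt (2*M) + Cxt) / m"
  define Am where "Am = Cxx * Y + Cxt"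
  define Bm where "Bm = (Cxxx * (N * Y) + 2 * Cxxt) * Y + Cxtt"
  define Kq where "Kq = 0 + 1/2 * Am * Bm + (Am^2 + Bm * sqrt (2*M))"
  define Kc where "Kc = 1/2 * Bm^2 + 3/2 * \<alpha> * sqrt (2*M) * Bm + (sqrt (2*M) * Bm + 2 * \<alpha>^2 * M)"
  have M0: "0 < M" using assms by linarith
  have sM: "0 \<le> sqrt (2*M)" using M0 by simp
  have "0 \<le> \<alpha> * sqrt (2*M)" using sM assms by simp
  then have "0 < \<alpha> * sqrt (2*M) + Cxt" using assms by linarith
  then have Y0: "0 < Y" unfolding Y_def using assms by simp
  have "0 < Cxx * Y" using Y0 assms by simp
  then have Am0: "0 < Am" unfolding Am_def using assms by linarith
  have "0 \<le> (Cxxx * (N * Y) + 2 * Cxxt) * Y" using Y0 assms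
    by (intro mult_nonneg_nonneg add_nonneg_nonneg) auto
  then have Bm0: "0 < Bm" unfolding Bm_def using assms by linarith
  have "0 < 1/2 * Am * Bm" "0 < Am^2" "0 \<le> Bm * sqrt (2*M)" using Am0 Bm0 sM by auto
  then have Kq0: "0 < Kq" unfolding Kq_def by linarith
  have "0 < 1/2 * Bm^2" "0 \<le> 3/2 * \<alpha> * sqrt (2*M) * Bm" "0 \<le> sqrt (2*M) * Bm" "0 \<le> 2 * \<alpha>^2 * M"
    using Bm0 sM assms M0 by auto
  then have Kc0: "0 < Kc" unfolding Kc_def by linarith
  have aL: "0 < 2 * \<alpha> * L" using assms by simp
  have cd: "cdec cubic m Cxx Cxt Cxxt Cxtt Cxxx \<alpha> N L M =
       (if cubic then \<alpha>^2 * L * (min 1 (2 * \<alpha> * L / Kc))^2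
        else 1/2 * Cxt * Cxtt * (min 1 (2 * \<alpha> * L / Kq))^3)"
    unfolding cdec_def Let_def Y_def[symmetric] Am_def[symmetric] Bm_def[symmetric] Kq_def[symmetric] Kc_def[symmetric] ..
  have "0 < min 1 (2 * \<alpha> * L / Kc)" "0 < min 1 (2 * \<alpha> * L / Kq)" using aL Kc0 Kq0 by auto
  then show ?thesis unfolding cd using assms by auto
qed

theorem theorem1:
  fixes f :: "real^'n \<Rightarrow> real \<Rightarrow> real"
    and m Cxx Cxt Cxxt Cxtt Cxxx \<alpha> :: real
    and cubic :: bool
    and x0 :: "real^'n"
    and xs :: "nat \<Rightarrow> real^'n" and ts :: "nat \<Rightarrow> real"
  assumes smooth: "C3_time f"
    and m_pos: "m > 0"
    and strong_convex: "\<forall>x t. 0 \<le> t \<longrightarrow> psd (hess_xx f x t - m *\<^sub>R mat 1)"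
    and consts_pos: "Cxx > 0" "Cxt > 0" "Cxxt > 0" "Cxtt > 0" "Cxxx > 0"
    and bnd_xx: "\<forall>x t. 0 \<le> t \<longrightarrow> spec_norm (hess_xx f x t) \<le> Cxx"
    and bnd_xt: "\<forall>x t. 0 \<le> t \<longrightarrow> norm (grad_xt f x t) \<le> Cxt"
    and bnd_xxt: "\<forall>x t. 0 \<le> t \<longrightarrow> spec_norm (hess_xxt f x t) \<le> Cxxt"
    and bnd_xtt: "\<forall>x t. 0 \<le> t \<longrightarrow> norm (grad_xtt f x t) \<le> Cxtt"
    and bnd_xxx: "\<forall>x t i. 0 \<le> t \<longrightarrow> spec_norm (hess_xxx f i x t) \<le> Cxxx"
    and alpha_pos: "\<alpha> > 0"
    and t0: "ts 0 = 0" and x_init: "xs 0 = x0"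
    and t_step: "\<forall>k. ts (Suc k) =
        Inf {t. ts k < t \<and> phi cubic Cxx Cxt Cxxx Cxxt Cxtt \<alpha> f (xs k) (ts k) t = 0}"
    and x_step: "\<forall>k. xs (Suc k) = xs k + (ts (Suc k) - ts k) *\<^sub>R xdot f \<alpha> (xs k) (ts k)"
    and V_pos: "\<forall>k. Vtraj f \<alpha> (xs k) (ts k) (ts k) > 0"
  shows "(\<forall>k. Vtraj f \<alpha> (xs k) (ts k) (ts (Suc k)) < Vtraj f \<alpha> (xs k) (ts k) (ts k))
         \<and> (\<lambda>k. Vtraj f \<alpha> (xs k) (ts k) (ts k)) \<longlonglongrightarrow> 0"
proof -
  note SM = step_main[OF smooth m_pos strong_convex consts_pos bnd_xx bnd_xt bnd_xxt bnd_xtt bnd_xxx alpha_pos]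
  define V where "V = (\<lambda>k. Vtraj f \<alpha> (xs k) (ts k) (ts k))"
  define c where "c = (\<lambda>L M. cdec cubic m Cxx Cxt Cxxt Cxtt Cxxx \<alpha> (real CARD('n)) L M)"
  have step: "ts k < ts (Suc k) \<and> Vtraj f \<alpha> (xs k) (ts k) (ts (Suc k)) < V k \<and>
      (\<forall>L M. 0 < L \<longrightarrow> L \<le> V k \<longrightarrow> V k \<le> M \<longrightarrow> Vtraj f \<alpha> (xs k) (ts k) (ts (Suc k)) \<le> V k - c L M)"
    if "0 \<le> ts k" for k
    using SM[OF that V_pos[rule_format, of k], of cubic] t_step unfolding V_def c_def by simp
  have tpos: "0 \<le> ts k" for k
  proof (induction k)
    case 0 then show ?case using t0 by simp
  next
    case (Suc k) then show ?case using step[OF Suc] by linarith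
  qed
  have Vn: "V (Suc k) = Vtraj f \<alpha> (xs k) (ts k) (ts (Suc k))" for k
    unfolding V_def Vtraj_def traj_def using x_step by simp
  have part1: "\<forall>k. Vtraj f \<alpha> (xs k) (ts k) (ts (Suc k)) < Vtraj f \<alpha> (xs k) (ts k) (ts k)"
    using step tpos unfolding V_def by blast
  have dec: "V (Suc k) \<le> V k" for k using step[OF tpos[of k]] Vn[of k] by simp
  have Vpos: "0 < V k" for k unfolding V_def using V_pos by blast
  have Vle0: "V k \<le> V 0" for k using lift_Suc_antimono_le[of V 0 k, OF dec] by simp
  have lim: "V \<longlonglongrightarrow> 0"
  proof (rule LIMSEQ_I)
    fix r :: real assume r: "0 < r"
    have "\<exists>N. V N < r"
    proof (rule ccontr)
      assume "\<not> (\<exists>N. V N < r)"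
      then have ge: "r \<le> V k" for k by (simp add: not_less)
      have c0: "0 < c r (V 0)" unfolding c_def
        by (rule cdec_pos) (use m_pos consts_pos alpha_pos r ge[of 0] in auto)
      have lin: "V k \<le> V 0 - real k * c r (V 0)" for k
      proof (induction k)
        case 0 then show ?case by simp
      next
        case (Suc k)
        have "V (Suc k) \<le> V k - c r (V 0)"
          using step[OF tpos[of k]] Vn[of k] r ge[of k] Vle0[of k] by simp
        then show ?case using Suc by (simp add: algebra_simps)
      qed
      obtain n where n: "V 0 < real n * c r (V 0)" using ex_less_of_nat_mult[OF c0] by blast
      have "V n < 0" using lin[of n] n by linarith
      then show False using Vpos[of n] by simp
    qed
    then obtain N where N: "V N < r" by blast
    have "\<forall>n\<ge>N. norm (V n - 0) < r"
    proof (intro allI impI)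
      fix n assume "N \<le> n"
      then have "V n \<le> V N" using lift_Suc_antimono_le[of V N n, OF dec] by simp
      then show "norm (V n - 0) < r" using N Vpos[of n] by simp
    qed
    then show "\<exists>no. \<forall>n\<ge>no. norm (V n - 0) < r" by blast
  qed
  show ?thesis using part1 lim unfolding V_def by simp
qed


end
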